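(* Let $q\geq2$ be an integer, $z\geq2$ real and $\beta\geq0$, and let $\Gamma_{\beta,q,z}:\mathcal{P}(\{1,\dots,q\})\to\mathbb{R}$ be the free energy $$\Gamma_{\beta,q,z}(\nu)=-\frac{\beta}{z}\sum_{i=1}^q\nu_i^z+\sum_{i=1}^q\nu_i\log(q\nu_i).$$ \begin{enumerate} \item[(i)] Any global minimizer of $\Gamma_{\beta,q,z}$ must have the form $$\bar{\nu}=\Bigl(\tfrac{1}{q}\bigl(1+(q-1)u\bigr),\tfrac{1}{q}(1-u),\dots,\tfrac{1}{q}(1-u)\Bigr)^T\quad\text{with } u\in[0,1),$$ or a point obtained from such a $\bar{\nu}$ by permuting the coordinates. \item[(ii)] There exists a critical inverse temperature $\beta_c(q,z)>0$ such that for $\beta<\beta_c(q,z)$ the global minimizer $\bar{\nu}$ is of the form $\bigl(\tfrac{1}{q}(1+(q-1)u),\tfrac{1}{q}(1-u),\dots,\tfrac{1}{q}(1-u)\bigr)^T$ (up to permutation of coordinates) with $u=0$, i.e. $\bar{\nu}^T=(\frac{1}{q},\dots,\frac{1}{q})$. If $\beta>\beta_c(q,z)$, then the global minimizers are of the form $\bigl(\tfrac{1}{q}(1+(q-1)u),\tfrac{1}{q}(1-u),\dots,\tfrac{1}{q}(1-u)\bigr)^T$ (up to permutation of coordinates) with $u=u(\beta,q,z)$, where $u(\beta,q,z)$ is the largest solution of the mean-field equation $$u=\frac{1-\exp\bigl(\Delta_{\beta,q,z}(u)\bigr)}{1+(q-1)\exp\bigl(\Delta_{\beta,q,z}(u)\bigr)}$$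 with $\Delta_{\beta,q,z}(u):=-\frac{\beta}{q^{z-1}}\left[\bigl(1+(q-1)u\bigr)^{z-1}-\bigl(1-u\bigr)^{z-1}\right]$. \item[(iii)] The function $\beta\mapsto u(\beta,q,z)$ is discontinuous at $\beta_c(q,z)$ for all $z\geq2$ and $q\geq2$ except for the case $(q,z)\in\{2\}\times[2,4]$. \end{enumerate}
   Context: Generalized mean-field $q$-state Potts model on the complete graph with $N$ vertices: $\pi^N_{\beta,q,z}(\xi)\propto\exp(-NF_{\beta,q,z}(L_N^\xi))$ with $F_{\beta,q,z}(\nu)=-\beta\sum_{i=1}^q\nu_i^z/z$ and $L_N^\xi$ the empirical distribution. The free energy $\Gamma_{\beta,q,z}=F_{\beta,q,z}+I(\cdot|\alpha)$, with $I(\cdot|\alpha)$ the relative entropy w.r.t. the uniform distribution $\alpha$ on $\{1,\dots,q\}$, governs (via large deviations and Varadhan's lemma) the limit of $L_N$. *)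

theory Defs
  imports "HOL-Analysis.Analysis"
begin

definition prob_simplex :: "nat \<Rightarrow> (nat \<Rightarrow> real) set" where
  "prob_simplex q = {\<nu>. (\<forall>i\<in>{1..q}. 0 \<le> \<nu> i) \<and> (\<Sum>i=1..q. \<nu> i) = 1
                    \<and> (\<forall>i. i \<notin> {1..q} \<longrightarrow> \<nu> i = 0)}"

text \<open>Free energy Gamma = F + I(.|uniform); note 0 * ln(q*0) = 0.\<close>
definition Gamma :: "real \<Rightarrow> nat \<Rightarrow> real \<Rightarrow> (nat \<Rightarrow> real) \<Rightarrow> real" where
  "Gamma \<beta> q z \<nu> = - (\<beta> / z) * (\<Sum>i=1..q. \<nu> i powr z)
                     + (\<Sum>i=1..q. \<nu> i * ln (real q * \<nu> i))"

definition global_minimizer :: "real \<Rightarrow> nat \<Rightarrow> real \<Rightarrow> (nat \<Rightarrow> real) \<Rightarrow> bool" where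
  "global_minimizer \<beta> q z \<nu> \<longleftrightarrow>
     \<nu> \<in> prob_simplex q \<and> (\<forall>\<mu>\<in>prob_simplex q. Gamma \<beta> q z \<nu> \<le> Gamma \<beta> q z \<mu>)"

definition sym_point :: "nat \<Rightarrow> real \<Rightarrow> (nat \<Rightarrow> real) \<Rightarrow> bool" where
  "sym_point q u \<nu> \<longleftrightarrow> (\<forall>i. i \<notin> {1..q} \<longrightarrow> \<nu> i = 0) \<and>
     (\<exists>k\<in>{1..q}. \<nu> k = (1 + (real q - 1) * u) / real q \<and>
                 (\<forall>j\<in>{1..q} - {k}. \<nu> j = (1 - u) / real q))"

definition Delta :: "real \<Rightarrow> nat \<Rightarrow> real \<Rightarrow> real \<Rightarrow> real" where
  "Delta \<beta> q z u = - (\<beta> / real q powr (z - 1)) *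
     ((1 + (real q - 1) * u) powr (z - 1) - (1 - u) powr (z - 1))"

definition mean_field_eq :: "real \<Rightarrow> nat \<Rightarrow> real \<Rightarrow> real \<Rightarrow> bool" where
  "mean_field_eq \<beta> q z u \<longleftrightarrow>
     u = (1 - exp (Delta \<beta> q z u)) / (1 + (real q - 1) * exp (Delta \<beta> q z u))"

text \<open>Largest solution of the mean-field equation in [0,1] (u = 0 is always a solution).\<close>
definition u_mf :: "real \<Rightarrow> nat \<Rightarrow> real \<Rightarrow> real" where
  "u_mf \<beta> q z = Sup {u \<in> {0..1}. mean_field_eq \<beta> q z u}"

end

theory Submission
  imports Defs "HOL-Real_Asymp.Real_Asymp"
begin

definition psi :: "real \<Rightarrow> nat \<Rightarrow> real \<Rightarrow> real \<Rightarrow> real" where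
  "psi \<beta> q z x = - (\<beta> / z) * x powr z + x * ln (real q * x)"

definition phi :: "real \<Rightarrow> real \<Rightarrow> real \<Rightarrow> real" where
  "phi \<beta> z x = ln x - \<beta> * x powr (z - 1)"

definition dphi :: "real \<Rightarrow> real \<Rightarrow> real \<Rightarrow> real" where
  "dphi \<beta> z x = (1 - \<beta> * (z - 1) * x powr (z - 1)) / x"

lemma Gamma_psi: "Gamma \<beta> q z \<nu> = (\<Sum>i=1..q. psi \<beta> q z (\<nu> i))"
proof -
  have "(\<Sum>i=1..q. psi \<beta> q z (\<nu> i)) = (\<Sum>i=1..q. - (\<beta> / z) * \<nu> i powr z) + (\<Sum>i=1..q. \<nu> i * ln (real q * \<nu> i))"
    unfolding psi_def by (rule sum.distrib)
  then show ?thesis unfolding Gamma_def by (simp add: sum_distrib_left)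
qed

lemma psi_deriv:
  assumes "x > 0" "q > 0" "z \<noteq> 0"
  shows "(psi \<beta> q z has_real_derivative (phi \<beta> z x + ln (real q) + 1)) (at x)"
proof -
  have "((\<lambda>x. - (\<beta> / z) * x powr z + x * ln (real q * x)) has_real_derivative
      (- (\<beta> / z) * (z * x powr (z - 1)) + (1 * ln (real q * x) + x * (real q / (real q * x))))) (at x)"
    using assms
    by (intro derivative_intros has_real_derivative_powr DERIV_ln_divide) (auto intro!: derivative_eq_intros)
  moreover have "- (\<beta> / z) * (z * x powr (z - 1)) + (1 * ln (real q * x) + x * (real q / (real q * x)))
      = phi \<beta> z x + ln (real q) + 1"
    using assms by (simp add: phi_def ln_mult field_simps)
  ultimately show ?thesis unfolding psi_def by simp
qed

lemma phi_deriv: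
  assumes "x > 0"
  shows "(phi \<beta> z has_real_derivative dphi \<beta> z x) (at x)"
proof -
  have "((\<lambda>x. ln x - \<beta> * x powr (z - 1)) has_real_derivative (1/x - \<beta> * ((z-1) * x powr (z - 1 - 1)))) (at x)"
    using assms by (intro DERIV_diff DERIV_ln_divide DERIV_cmult has_real_derivative_powr) auto
  moreover have "1/x - \<beta> * ((z-1) * x powr (z - 1 - 1)) = dphi \<beta> z x"
    using assms by (simp add: dphi_def powr_diff field_simps) (simp add: power2_eq_square algebra_simps)
  ultimately show ?thesis unfolding phi_def by simp
qed

lemma xlnx_cont:
  assumes c: "c > 0"
  shows "continuous_on {0..} (\<lambda>x::real. x * ln (c * x))"
proof -
  have eq: "\<And>x. x > 0 \<Longrightarrow> x * ln (c*x) = x * ln c + x * ln x"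
    using c by (simp add: ln_mult field_simps)
  show ?thesis
    unfolding continuous_on_def
  proof (intro ballI)
    fix x :: real assume x: "x \<in> {0..}"
    show "((\<lambda>x. x * ln (c * x)) \<longlongrightarrow> x * ln (c * x)) (at x within {0..})"
    proof (cases "x = 0")
      case True
      have "((\<lambda>x::real. x * ln c + x * ln x) \<longlongrightarrow> 0) (at_right 0)"
        by real_asymp
      then have "((\<lambda>x::real. x * ln (c*x)) \<longlongrightarrow> 0) (at_right 0)"
        by (rule Lim_transform_eventually) (auto simp: eventually_at_right_field eq intro!: exI[of _ 1])
      then have "((\<lambda>x::real. x * ln (c*x)) \<longlongrightarrow> 0) (at 0 within {0..})"
        by (simp add: at_within_Ici_at_right)
      then show ?thesis using True by simp
    next
      case False
      then have "x > 0" using x by auto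
      then have "isCont (\<lambda>x. x * ln (c * x)) x"
        using c by (auto intro!: continuous_intros)
      then show ?thesis by (meson continuous_at_imp_continuous_at_within continuous_within)
    qed
  qed
qed

lemma psi_cont:
  assumes "q > 0" "z > 0"
  shows "continuous_on {0..} (psi \<beta> q z)"
proof -
  have "continuous_on {0..} (\<lambda>x::real. x powr z)"
    using assms by (intro continuous_on_powr') (auto intro: continuous_intros)
  moreover have "continuous_on {0..} (\<lambda>x::real. x * ln (real q * x))"
    using assms by (intro xlnx_cont) auto
  moreover have eq: "psi \<beta> q z = (\<lambda>x. (-(\<beta>/z)) * x powr z + x * ln (real q * x))"
    by (rule ext) (simp add: psi_def)
  ultimately show ?thesis
    by (simp only: eq) (intro continuous_on_add continuous_on_mult_left; assumption)
qed

lemma psi_0 [simp]: "psi \<beta> q z 0 = 0"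
  by (simp add: psi_def)

lemma simplex_le1:
  assumes "\<nu> \<in> prob_simplex q" "i \<in> {1..q}"
  shows "\<nu> i \<le> 1"
proof -
  have "\<nu> i \<le> (\<Sum>i=1..q. \<nu> i)"
    using assms by (intro member_le_sum) (auto simp: prob_simplex_def)
  then show ?thesis using assms by (simp add: prob_simplex_def)
qed

lemma sum_upd2:
  fixes F :: "real \<Rightarrow> real"
  assumes "finite S" "j \<in> S" "k \<in> S" "j \<noteq> k"
  shows "(\<Sum>i\<in>S. F ((\<nu>(j := a, k := b)) i)) = (\<Sum>i\<in>S. F (\<nu> i)) - F (\<nu> j) - F (\<nu> k) + F a + F b"
proof -
  have S: "S = insert j (insert k (S - {j, k}))" using assms by auto
  have fin: "finite (S - {j,k})" using assms by auto
  have eq: "(\<Sum>i\<in>S - {j,k}. F ((\<nu>(j := a, k := b)) i)) = (\<Sum>i\<in>S - {j,k}. F (\<nu> i))"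
    by (intro sum.cong) auto
  have "(\<Sum>i\<in>S. F ((\<nu>(j := a, k := b)) i)) = F a + (F b + (\<Sum>i\<in>S - {j,k}. F ((\<nu>(j := a, k := b)) i)))"
    using assms fin by (subst S) (simp add: sum.insert_if)
  moreover have "(\<Sum>i\<in>S. F (\<nu> i)) = F (\<nu> j) + (F (\<nu> k) + (\<Sum>i\<in>S - {j,k}. F (\<nu> i)))"
    using assms fin by (subst S) (simp add: sum.insert_if)
  ultimately show ?thesis using eq by linarith
qed

lemma perturb:
  assumes "\<nu> \<in> prob_simplex q" "j \<in> {1..q}" "k \<in> {1..q}" "j \<noteq> k"
    "0 \<le> \<nu> j + t" "0 \<le> \<nu> k - t"
  shows "\<nu>(j := \<nu> j + t, k := \<nu> k - t) \<in> prob_simplex q"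
    and "Gamma \<beta> q z (\<nu>(j := \<nu> j + t, k := \<nu> k - t)) =
           Gamma \<beta> q z \<nu> - psi \<beta> q z (\<nu> j) - psi \<beta> q z (\<nu> k)
           + psi \<beta> q z (\<nu> j + t) + psi \<beta> q z (\<nu> k - t)"
proof -
  have s: "(\<Sum>i=1..q. (\<nu>(j := \<nu> j + t, k := \<nu> k - t)) i) = (\<Sum>i=1..q. \<nu> i)"
    using sum_upd2[of "{1..q}" j k "\<lambda>x. x" \<nu> "\<nu> j + t" "\<nu> k - t"] assms by simp
  show "\<nu>(j := \<nu> j + t, k := \<nu> k - t) \<in> prob_simplex q"
    using assms s unfolding prob_simplex_def by auto
  show "Gamma \<beta> q z (\<nu>(j := \<nu> j + t, k := \<nu> k - t)) =
           Gamma \<beta> q z \<nu> - psi \<beta> q z (\<nu> j) - psi \<beta> q z (\<nu> k)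
           + psi \<beta> q z (\<nu> j + t) + psi \<beta> q z (\<nu> k - t)"
    unfolding Gamma_psi using sum_upd2[of "{1..q}" j k "psi \<beta> q z" \<nu> "\<nu> j + t" "\<nu> k - t"] assms
    by simp
qed

lemma min_pair:
  assumes "global_minimizer \<beta> q z \<nu>" "j \<in> {1..q}" "k \<in> {1..q}" "j \<noteq> k"
    "- \<nu> j \<le> t" "t \<le> \<nu> k"
  shows "psi \<beta> q z (\<nu> j) + psi \<beta> q z (\<nu> k) \<le> psi \<beta> q z (\<nu> j + t) + psi \<beta> q z (\<nu> k - t)"
proof -
  have nu: "\<nu> \<in> prob_simplex q" using assms by (simp add: global_minimizer_def)
  have "Gamma \<beta> q z \<nu> \<le> Gamma \<beta> q z (\<nu>(j := \<nu> j + t, k := \<nu> k - t))"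
    using assms perturb(1)[OF nu assms(2-4)] unfolding global_minimizer_def by auto
  then show ?thesis using perturb(2)[OF nu assms(2-4), of t \<beta> z] assms by simp
qed

lemma powr_le_1:
  fixes x e :: real
  assumes "0 \<le> x" "x \<le> 1" "0 \<le> e"
  shows "x powr e \<le> 1"
  using powr_mono2[of e x 1] assms by simp

lemma pos_lemma:
  assumes q: "q > 0" and z: "z > 1" and b: "\<beta> \<ge> 0" and y: "0 < y" "y \<le> 1"
  shows "\<exists>t. 0 < t \<and> t \<le> y \<and> psi \<beta> q z t + psi \<beta> q z (y - t) < psi \<beta> q z y"
proof -
  define A where "A = \<beta> - ln (real q * y / 2) - 1"
  define t where "t = min (y/2) (exp (-A-1) / real q)"
  have t0: "0 < t" using y q by (simp add: t_def)
  have ty: "t \<le> y/2" unfolding t_def by (rule min.cobounded1)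
  have "\<exists>\<xi>>y-t. \<xi> < y \<and> psi \<beta> q z y - psi \<beta> q z (y-t) = (y - (y-t)) * (phi \<beta> z \<xi> + ln (real q) + 1)"
    using t0 ty y q z by (intro MVT2 psi_deriv) auto
  then obtain \<xi> where xi: "\<xi> > y - t" "\<xi> < y"
    and eq: "psi \<beta> q z y - psi \<beta> q z (y-t) = t * (phi \<beta> z \<xi> + ln (real q) + 1)" by auto
  have xi2: "\<xi> > y/2" using xi ty by simp
  have "\<xi> powr (z-1) \<le> 1" using xi y xi2 z by (intro powr_le_1) auto
  then have "\<beta> * \<xi> powr (z-1) \<le> \<beta>" using b by (simp add: mult_left_le)
  moreover have "ln (y/2) \<le> ln \<xi>" using xi2 y by simp
  ultimately have "phi \<beta> z \<xi> + ln (real q) + 1 \<ge> - A"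
    unfolding phi_def A_def using y q by (simp add: ln_mult ln_div)
  then have "-(t * A) \<le> t * (phi \<beta> z \<xi> + ln (real q) + 1)"
    using mult_left_mono[of "-A" _ t] t0 by simp
  then have 1: "psi \<beta> q z (y-t) - psi \<beta> q z y \<le> t * A"
    using eq by linarith
  have "ln (real q * t) \<le> ln (exp (-A-1))"
    using t0 q by (subst ln_le_cancel_iff) (auto simp: t_def min_def field_simps split: if_splits)
  then have lnt: "ln (real q * t) \<le> -A - 1" by simp
  have "psi \<beta> q z t \<le> t * ln (real q * t)"
    unfolding psi_def using b z t0 by (simp add: mult_nonneg_nonneg)
  also have "\<dots> \<le> t * (-A-1)" using lnt t0 by (simp add: mult_left_mono)
  finally have "psi \<beta> q z t + psi \<beta> q z (y - t) < psi \<beta> q z y"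
    using 1 t0 by (simp add: algebra_simps)
  then show ?thesis using t0 ty y by (intro exI[of _ t]) auto
qed

lemma crit_pair:
  assumes q: "q > 0" and z: "z \<noteq> 0" and x: "x > 0" and y: "y > 0"
    and min: "\<And>t. - x \<le> t \<Longrightarrow> t \<le> y \<Longrightarrow> psi \<beta> q z x + psi \<beta> q z y \<le> psi \<beta> q z (x + t) + psi \<beta> q z (y - t)"
  shows "phi \<beta> z x = phi \<beta> z y"
proof -
  define f where "f = (\<lambda>t. psi \<beta> q z (x + t) + psi \<beta> q z (y - t))"
  have d1: "((\<lambda>t. psi \<beta> q z (x + t)) has_real_derivative (phi \<beta> z x + ln (real q) + 1) * 1) (at 0)"
    using psi_deriv[OF _ q z, of "x + 0" \<beta>] x
    by (intro DERIV_chain2[where f = "psi \<beta> q z"]) (auto intro!: derivative_eq_intros)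
  have d2: "((\<lambda>t. psi \<beta> q z (y - t)) has_real_derivative (phi \<beta> z y + ln (real q) + 1) * (-1)) (at 0)"
    using psi_deriv[OF _ q z, of "y - 0" \<beta>] y
    by (intro DERIV_chain2[where f = "psi \<beta> q z"]) (auto intro!: derivative_eq_intros)
  have "(f has_real_derivative (phi \<beta> z x + ln (real q) + 1) * 1 + (phi \<beta> z y + ln (real q) + 1) * (-1)) (at 0)"
    unfolding f_def by (rule DERIV_add[OF d1 d2])
  moreover have "\<forall>t. \<bar>0 - t\<bar> < min x y \<longrightarrow> f 0 \<le> f t"
    unfolding f_def using min by auto
  ultimately have "(phi \<beta> z x + ln (real q) + 1) * 1 + (phi \<beta> z y + ln (real q) + 1) * (-1) = 0"
    using x y by (intro DERIV_local_min[of f _ 0 "min x y"]) auto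
  then show ?thesis by simp
qed

lemma dphi_zero:
  assumes "x > 0" "dphi \<beta> z x = 0"
  shows "\<beta> * (z - 1) * x powr (z - 1) = 1"
proof -
  have "(1 - \<beta> * (z - 1) * x powr (z - 1)) / x = 0" using assms(2) by (simp only: dphi_def)
  then show ?thesis using assms(1) by (simp add: divide_eq_0_iff)
qed

lemma phi_rolle:
  assumes ab: "0 < a" "a < b" and eq: "phi \<beta> z a = phi \<beta> z b"
  shows "\<exists>\<xi>>a. \<xi> < b \<and> \<beta> * (z - 1) * \<xi> powr (z - 1) = 1"
proof -
  have c: "continuous_on {a..b} (phi \<beta> z)"
  proof (rule DERIV_continuous_on[of _ _ "dphi \<beta> z"])
    fix x assume "x \<in> {a..b}"
    then have "x > 0" using ab by auto
    then show "(phi \<beta> z has_real_derivative dphi \<beta> z x) (at x within {a..b})"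
      by (rule has_field_derivative_at_within[OF phi_deriv])
  qed
  have d: "\<And>x. a < x \<Longrightarrow> x < b \<Longrightarrow> phi \<beta> z differentiable at x"
  proof -
    fix x assume "a < x" "x < b"
    then have "(phi \<beta> z has_real_derivative dphi \<beta> z x) (at x)"
      using ab by (intro phi_deriv) simp
    then show "phi \<beta> z differentiable at x"
      unfolding real_differentiable_def by blast
  qed
  obtain \<xi> where xi: "\<xi> > a" "\<xi> < b" "(phi \<beta> z has_real_derivative 0) (at \<xi>)"
    using Rolle[of a b "phi \<beta> z", OF ab(2) eq c d] by blast
  have "(phi \<beta> z has_real_derivative dphi \<beta> z \<xi>) (at \<xi>)"
    using xi ab by (intro phi_deriv) simp
  then have "dphi \<beta> z \<xi> = 0"
    using xi(3) DERIV_unique by blast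
  then have "\<beta> * (z - 1) * \<xi> powr (z - 1) = 1"
    using xi ab by (intro dphi_zero) auto
  then show ?thesis using xi by blast
qed

lemma phi_three:
  assumes z: "z > 1" and "0 < x" "x < y" "y < w" "phi \<beta> z x = phi \<beta> z y" "phi \<beta> z y = phi \<beta> z w"
  shows False
proof -
  obtain \<xi>1 where 1: "\<xi>1 > x" "\<xi>1 < y" "\<beta> * (z - 1) * \<xi>1 powr (z - 1) = 1"
    using phi_rolle[of x y \<beta> z] assms by auto
  obtain \<xi>2 where 2: "\<xi>2 > y" "\<xi>2 < w" "\<beta> * (z - 1) * \<xi>2 powr (z - 1) = 1"
    using phi_rolle[of y w \<beta> z] assms by auto
  have "\<xi>1 powr (z-1) < \<xi>2 powr (z-1)"
    using 1 2 assms by (intro powr_less_mono2) auto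
  moreover have "\<beta> * (z - 1) > 0"
  proof -
    have "\<xi>1 powr (z-1) > 0" using 1 assms by simp
    with 1(3) show ?thesis by (metis zero_less_mult_pos2 zero_less_one)
  qed
  ultimately have "\<beta> * (z - 1) * \<xi>1 powr (z - 1) < \<beta> * (z - 1) * \<xi>2 powr (z - 1)"
    by (rule mult_strict_left_mono)
  then show False using 1 2 by simp
qed

lemma two_max:
  assumes q: "q > 0" and z: "z > 1" and ab: "0 < a" "a < b" and eqab: "phi \<beta> z a = phi \<beta> z b"
    and min: "\<And>t. - b \<le> t \<Longrightarrow> t \<le> b \<Longrightarrow> psi \<beta> q z b + psi \<beta> q z b \<le> psi \<beta> q z (b + t) + psi \<beta> q z (b - t)"
  shows False
proof -
  obtain \<xi> where xi: "\<xi> > a" "\<xi> < b" "\<beta> * (z - 1) * \<xi> powr (z - 1) = 1"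
    using phi_rolle[OF ab eqab] by auto
  have pos: "\<beta> * (z - 1) > 0"
  proof -
    have "\<xi> powr (z-1) > 0" using xi ab by simp
    with xi(3) show ?thesis by (metis zero_less_mult_pos2 zero_less_one)
  qed
  have neg: "dphi \<beta> z x < 0" if "x > \<xi>" for x
  proof -
    have "\<xi> powr (z-1) < x powr (z-1)"
      using that xi ab z by (intro powr_less_mono2) auto
    then have "\<beta> * (z - 1) * \<xi> powr (z - 1) < \<beta> * (z - 1) * x powr (z - 1)"
      using pos by (rule mult_strict_left_mono)
    then show ?thesis using xi that ab unfolding dphi_def by (simp add: divide_neg_pos)
  qed
  define t where "t = (b - \<xi>) / 2"
  have t: "0 < t" "t < b" using xi ab by (auto simp: t_def)
  define f where "f = (\<lambda>s. psi \<beta> q z (b + s) + psi \<beta> q z (b - s))"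
  have fd: "(f has_real_derivative (phi \<beta> z (b + s) - phi \<beta> z (b - s))) (at s)" if "0 \<le> s" "s < b" for s
  proof -
    have d1: "((\<lambda>t. psi \<beta> q z (b + t)) has_real_derivative (phi \<beta> z (b + s) + ln (real q) + 1) * 1) (at s)"
      using psi_deriv[OF _ q, of "b + s" z \<beta>] that ab z
      by (intro DERIV_chain2[where f = "psi \<beta> q z"]) (auto intro!: derivative_eq_intros)
    have d2: "((\<lambda>t. psi \<beta> q z (b - t)) has_real_derivative (phi \<beta> z (b - s) + ln (real q) + 1) * (-1)) (at s)"
      using psi_deriv[OF _ q, of "b - s" z \<beta>] that ab z
      by (intro DERIV_chain2[where f = "psi \<beta> q z"]) (auto intro!: derivative_eq_intros)
    show ?thesis using DERIV_add[OF d1 d2] unfolding f_def by simp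
  qed
  have "f t < f 0"
  proof (rule DERIV_neg_imp_decreasing_open[of 0 t f, OF t(1)])
    fix s assume s: "0 < s" "s < t"
    have "phi \<beta> z (b + s) < phi \<beta> z (b - s)"
    proof (rule DERIV_neg_imp_decreasing_open[of "b - s" "b + s" "phi \<beta> z"])
      show "b - s < b + s" using s by simp
      fix x assume "b - s < x" "x < b + s"
      then have "x > \<xi>" using s t_def by simp
      then show "\<exists>y. (phi \<beta> z has_real_derivative y) (at x) \<and> y < 0"
        using neg[of x] phi_deriv[of x \<beta> z] xi ab by (intro exI[of _ "dphi \<beta> z x"]) auto
    next
      show "continuous_on {b - s..b + s} (phi \<beta> z)"
        using s t_def xi ab by (intro DERIV_continuous_on[of _ _ "dphi \<beta> z"] has_field_derivative_at_within[OF phi_deriv]) auto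
    qed
    then show "\<exists>y. (f has_real_derivative y) (at s) \<and> y < 0"
      using fd[of s] s t by (intro exI[of _ "phi \<beta> z (b + s) - phi \<beta> z (b - s)"]) auto
  next
    show "continuous_on {0..t} f"
      using fd t by (intro DERIV_continuous_on[of _ _ "\<lambda>s. phi \<beta> z (b + s) - phi \<beta> z (b - s)"] has_field_derivative_at_within[OF fd]) auto
  qed
  moreover have "f 0 \<le> f t" using min[of t] t unfolding f_def by simp
  ultimately show False by simp
qed

theorem part_i:
  assumes q: "q \<ge> 2" and z: "z \<ge> 2" and b0: "\<beta> \<ge> 0" and gm: "global_minimizer \<beta> q z \<nu>"
  shows "\<exists>u\<in>{0..<1}. sym_point q u \<nu>"
proof -
  define S where "S = {1..q}"
  have nu: "\<nu> \<in> prob_simplex q" using gm by (simp add: global_minimizer_def)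
  have nonneg: "\<And>i. i \<in> S \<Longrightarrow> 0 \<le> \<nu> i" and outside: "\<And>i. i \<notin> S \<Longrightarrow> \<nu> i = 0"
    and sum1: "(\<Sum>i\<in>S. \<nu> i) = 1"
    using nu by (auto simp: prob_simplex_def S_def)
  have le1: "\<And>i. i \<in> S \<Longrightarrow> \<nu> i \<le> 1" using simplex_le1[OF nu] by (simp add: S_def)
  have q0: "q > 0" using q by simp
  have finS: "finite S" and neS: "S \<noteq> {}" using q by (auto simp: S_def)
  have minp: "\<And>j k t. j \<in> S \<Longrightarrow> k \<in> S \<Longrightarrow> j \<noteq> k \<Longrightarrow> - \<nu> j \<le> t \<Longrightarrow> t \<le> \<nu> k \<Longrightarrow>
      psi \<beta> q z (\<nu> j) + psi \<beta> q z (\<nu> k) \<le> psi \<beta> q z (\<nu> j + t) + psi \<beta> q z (\<nu> k - t)"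
    using min_pair[OF gm] by (simp add: S_def)
  have pos: "\<And>i. i \<in> S \<Longrightarrow> \<nu> i > 0"
  proof (rule ccontr)
    fix j assume j: "j \<in> S" "\<not> \<nu> j > 0"
    then have j0: "\<nu> j = 0" using nonneg[OF j(1)] by simp
    have "\<exists>k\<in>S. \<nu> k > 0"
    proof (rule ccontr)
      assume "\<not> (\<exists>k\<in>S. \<nu> k > 0)"
      then have "\<forall>k\<in>S. \<nu> k = 0" using nonneg by force
      then have "(\<Sum>i\<in>S. \<nu> i) = 0" by simp
      then show False using sum1 by simp
    qed
    then obtain k where k: "k \<in> S" "\<nu> k > 0" by blast
    have jk: "j \<noteq> k" using j0 k by auto
    obtain t where t: "0 < t" "t \<le> \<nu> k" "psi \<beta> q z t + psi \<beta> q z (\<nu> k - t) < psi \<beta> q z (\<nu> k)"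
      using pos_lemma[OF q0 _ b0 k(2) le1[OF k(1)], of z] z by auto
    have "psi \<beta> q z (\<nu> j) + psi \<beta> q z (\<nu> k) \<le> psi \<beta> q z (\<nu> j + t) + psi \<beta> q z (\<nu> k - t)"
      using minp[OF j(1) k(1) jk, of t] t j0 by simp
    then show False using t j0 by simp
  qed
  have crit: "\<And>j k. j \<in> S \<Longrightarrow> k \<in> S \<Longrightarrow> phi \<beta> z (\<nu> j) = phi \<beta> z (\<nu> k)"
  proof -
    fix j k assume jk: "j \<in> S" "k \<in> S"
    show "phi \<beta> z (\<nu> j) = phi \<beta> z (\<nu> k)"
    proof (cases "j = k")
      case False
      show ?thesis
        using minp[OF jk False] pos[OF jk(1)] pos[OF jk(2)] z q0
        by (intro crit_pair[of q z "\<nu> j" "\<nu> k" \<beta>]) auto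
    qed simp
  qed
  define b where "b = Max (\<nu> ` S)"
  have "b \<in> \<nu> ` S" unfolding b_def using finS neS by (intro Max_in) auto
  then obtain k where k: "k \<in> S" "\<nu> k = b" by auto
  have ge: "\<And>i. i \<in> S \<Longrightarrow> \<nu> i \<le> b" unfolding b_def using finS by (intro Max_ge) auto
  have cardS: "card S = q" by (simp add: S_def)
  have sumk: "(\<Sum>i\<in>S. \<nu> i) = \<nu> k + (\<Sum>i\<in>S - {k}. \<nu> i)"
    using finS k(1) by (simp add: sum.remove)
  have cardSk: "card (S - {k}) = q - 1" using k(1) finS cardS by simp
  have qr: "real (q - 1) = real q - 1" using q by (simp add: of_nat_diff)
  show ?thesis
  proof (cases "\<forall>i\<in>S. \<nu> i = b")
    case True
    have "(\<Sum>i\<in>S. \<nu> i) = real q * b" using True cardS by simp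
    then have bq: "b = 1 / real q" using sum1 q0 by (simp add: field_simps)
    have "sym_point q 0 \<nu>"
      unfolding sym_point_def using outside True k bq by (auto simp: S_def)
    then show ?thesis by auto
  next
    case False
    then obtain l where l: "l \<in> S" "\<nu> l \<noteq> b" by auto
    define a where "a = \<nu> l"
    have ab: "a < b" using ge[OF l(1)] l(2) by (simp add: a_def)
    have a0: "a > 0" using pos[OF l(1)] by (simp add: a_def)
    have others: "\<nu> j = a" if j: "j \<in> S - {k}" for j
    proof -
      have jS: "j \<in> S" and jk: "j \<noteq> k" using j by auto
      have "\<nu> j \<noteq> b"
      proof
        assume jb: "\<nu> j = b"
        show False
        proof (rule two_max[OF q0 _ a0 ab])
          show "1 < z" using z by simp
          show "phi \<beta> z a = phi \<beta> z b" using crit[OF l(1) k(1)] k(2) by (simp add: a_def)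
          fix t assume "- b \<le> t" "t \<le> b"
          then show "psi \<beta> q z b + psi \<beta> q z b \<le> psi \<beta> q z (b + t) + psi \<beta> q z (b - t)"
            using minp[OF jS k(1) jk, of t] jb k(2) by simp
        qed
      qed
      then have jlt: "\<nu> j < b" using ge[OF jS] by simp
      have e1: "phi \<beta> z (\<nu> j) = phi \<beta> z a" using crit[OF jS l(1)] by (simp add: a_def)
      have e2: "phi \<beta> z a = phi \<beta> z b" using crit[OF l(1) k(1)] k(2) by (simp add: a_def)
      show "\<nu> j = a"
      proof (rule ccontr)
        assume ne: "\<nu> j \<noteq> a"
        show False
        proof (cases "\<nu> j < a")
          case True
          show False using phi_three[of z "\<nu> j" a b \<beta>] True ab e1 e2 z pos[OF jS] by auto
        next
          case False
          then have "a < \<nu> j" using ne by simp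
          then show False using phi_three[of z a "\<nu> j" b \<beta>] jlt e1 e2 z a0 by auto
        qed
      qed
    qed
    have "(\<Sum>i\<in>S - {k}. \<nu> i) = (\<Sum>i\<in>S - {k}. a)" using others by (intro sum.cong) auto
    then have "(\<Sum>i\<in>S - {k}. \<nu> i) = (real q - 1) * a" using cardSk qr by simp
    then have sb: "b + (real q - 1) * a = 1" using sumk sum1 k(2) by simp
    define u where "u = 1 - real q * a"
    have u1: "u < 1" using a0 q0 by (simp add: u_def)
    have u0: "0 \<le> u" using ab sb by (simp add: u_def algebra_simps)
    have "sym_point q u \<nu>"
      unfolding sym_point_def
    proof (intro conjI allI impI bexI[of _ k])
      show "\<And>i. i \<notin> {1..q} \<Longrightarrow> \<nu> i = 0" using outside by (simp add: S_def)
      show "k \<in> {1..q}" using k by (simp add: S_def)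
      show "\<nu> k = (1 + (real q - 1) * u) / real q"
      proof -
        have bb: "b = 1 - (real q - 1) * a" using sb by simp
        show ?thesis using k(2) q0 unfolding u_def bb by (simp add: divide_simps) (simp add: algebra_simps)
      qed
      show "\<forall>j\<in>{1..q} - {k}. \<nu> j = (1 - u) / real q"
        using others q0 unfolding u_def by (simp add: S_def)
    qed
    then show ?thesis using u0 u1 by auto
  qed
qed

lemma inc_on:
  assumes d: "\<And>x. x \<ge> a \<Longrightarrow> (f has_real_derivative f' x) (at x)"
    and pos: "\<And>x. a < x \<Longrightarrow> x < c \<Longrightarrow> f' x > 0"
    and xy: "a \<le> x" "x < y" "y \<le> c"
  shows "f x < f y"
proof (rule DERIV_pos_imp_increasing_open[OF xy(2)])
  fix t assume "x < t" "t < y"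
  then show "\<exists>y. (f has_real_derivative y) (at t) \<and> 0 < y"
    using d[of t] pos[of t] xy by (intro exI[of _ "f' t"]) auto
next
  show "continuous_on {x..y} f"
    using xy by (intro DERIV_continuous_on[of _ _ f'] has_field_derivative_at_within[OF d]) auto
qed

lemma dec_on:
  assumes d: "\<And>x. x \<ge> a \<Longrightarrow> (f has_real_derivative f' x) (at x)"
    and neg: "\<And>x. x > c \<Longrightarrow> f' x < 0"
    and xy: "a \<le> c" "c \<le> x" "x < y"
  shows "f y < f x"
proof (rule DERIV_neg_imp_decreasing_open[OF xy(3)])
  fix t assume "x < t" "t < y"
  then show "\<exists>y. (f has_real_derivative y) (at t) \<and> y < 0"
    using d[of t] neg[of t] xy by (intro exI[of _ "f' t"]) auto
next
  show "continuous_on {x..y} f"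
    using xy by (intro DERIV_continuous_on[of _ _ f'] has_field_derivative_at_within[OF d]) auto
qed

lemma SC1:
  assumes d: "\<And>x. x \<ge> a \<Longrightarrow> (f has_real_derivative f' x) (at x)"
    and neg: "\<And>x. x > a \<Longrightarrow> f' x < 0" and fa: "f a \<le> 0" and x: "x > a"
  shows "f x < 0"
  using dec_on[OF d neg order_refl order_refl x] fa by simp

lemma SC2:
  assumes d: "\<And>x. x \<ge> a \<Longrightarrow> (f has_real_derivative f' x) (at x)"
    and ca: "c \<ge> a"
    and pos: "\<And>x. a < x \<Longrightarrow> x < c \<Longrightarrow> f' x > 0"
    and neg: "\<And>x. x > c \<Longrightarrow> f' x < 0"
    and fa: "f a \<ge> 0" and R: "R > a" "f R < 0"
  shows "\<exists>r0\<ge>c. f r0 = 0 \<and> (\<forall>x. a < x \<and> x < r0 \<longrightarrow> f x > 0) \<and> (\<forall>x. x > r0 \<longrightarrow> f x < 0)"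
proof -
  have left: "f x > 0" if "a < x" "x \<le> c" for x
    using inc_on[OF d pos order_refl that] fa by simp
  have fc: "f c \<ge> 0" using left[of c] fa ca by (cases "c = a") auto
  have Rc: "R > c" using left[of R] R by (cases "R \<le> c") auto
  have "\<exists>r0\<ge>c. r0 \<le> R \<and> f r0 = 0"
  proof (rule IVT2)
    show "f R \<le> 0" "0 \<le> f c" "c \<le> R" using R fc Rc by auto
    show "\<forall>x. c \<le> x \<and> x \<le> R \<longrightarrow> isCont f x"
    proof (intro allI impI)
      fix x assume "c \<le> x \<and> x \<le> R"
      then have "x \<ge> a" using ca by simp
      then show "isCont f x" using DERIV_isCont[OF d] by blast
    qed
  qed
  then obtain r0 where r0: "r0 \<ge> c" "f r0 = 0" by blast
  have "f x > 0" if "a < x" "x < r0" for x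
  proof (cases "x \<le> c")
    case True then show ?thesis using left that by simp
  next
    case False
    then show ?thesis using dec_on[OF d neg ca, of x r0] that r0 by simp
  qed
  moreover have "f x < 0" if "x > r0" for x
    using dec_on[OF d neg ca r0(1) that] r0 by simp
  ultimately show ?thesis using r0 by blast
qed

definition hh :: "real \<Rightarrow> real \<Rightarrow> real \<Rightarrow> real" where
  "hh m p r = p * m^2 * r powr (p-1) - m * r powr p + m - p * r"
definition jj :: "real \<Rightarrow> real \<Rightarrow> real \<Rightarrow> real" where
  "jj m p r = (p-1) * m^2 * r powr (p-2) - m * r powr (p-1) - 1"
definition djj :: "real \<Rightarrow> real \<Rightarrow> real \<Rightarrow> real" where
  "djj m p r = (p-1) * m * r powr (p-3) * ((p-2)*m - r)"

lemma hh_deriv: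
  assumes "r > 0"
  shows "(hh m p has_real_derivative p * jj m p r) (at r)"
proof -
  have "((\<lambda>r. p * m^2 * r powr (p-1) - m * r powr p + m - p * r) has_real_derivative
     p * m^2 * ((p-1) * r powr (p-1-1)) - m * (p * r powr (p - 1)) + 0 - p * 1) (at r)"
    using assms by (intro DERIV_diff DERIV_add DERIV_cmult has_real_derivative_powr DERIV_const DERIV_ident) auto
  moreover have "p * m^2 * ((p-1) * r powr (p-1-1)) - m * (p * r powr (p - 1)) + 0 - p * 1 = p * jj m p r"
    by (simp add: jj_def algebra_simps)
  ultimately show ?thesis unfolding hh_def[abs_def] by simp
qed

lemma jj_deriv:
  assumes "r > 0"
  shows "(jj m p has_real_derivative djj m p r) (at r)"
proof -
  have "((\<lambda>r. (p-1) * m^2 * r powr (p-2) - m * r powr (p-1) - 1) has_real_derivative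
     (p-1) * m^2 * ((p-2) * r powr (p-2-1)) - m * ((p-1) * r powr (p - 1 - 1)) - 0) (at r)"
    using assms by (intro DERIV_diff DERIV_add DERIV_cmult has_real_derivative_powr DERIV_const DERIV_ident) auto
  moreover have "r powr (p - 1 - 1) = r powr (p - 3) * r"
  proof -
    have "r powr (p-1-1) = r powr ((p-3) + 1)" by (simp add: algebra_simps)
    also have "\<dots> = r powr (p-3) * r powr 1" by (rule powr_add)
    also have "\<dots> = r powr (p-3) * r" using assms by simp
    finally show ?thesis .
  qed
  ultimately show ?thesis unfolding jj_def[abs_def] djj_def
    by (simp add: algebra_simps power2_eq_square)
qed

lemma powr_m1: "r > 0 \<Longrightarrow> (r::real) powr a = r powr (a - 1) * r"
proof -
  assume r: "r > 0"
  have "r powr a = r powr ((a - 1) + 1)" by simp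
  also have "\<dots> = r powr (a - 1) * r powr 1" by (rule powr_add)
  finally show ?thesis using r by simp
qed

lemma J_shape:
  assumes m: "m \<ge> 1" and p: "p \<ge> 1"
  shows "\<exists>r1\<ge>1. (\<forall>r. 1 < r \<and> r < r1 \<longrightarrow> jj m p r > 0) \<and> (\<forall>r>r1. jj m p r < 0)
     \<and> (m = 1 \<and> p > 3 \<longrightarrow> r1 > 1) \<and> (m = 1 \<and> p \<le> 3 \<longrightarrow> r1 = 1)"
proof (cases "p = 1")
  case True
  have "jj m p r < 0" if "r > 0" for r using that m True by (simp add: jj_def)
  then show ?thesis using True by (intro exI[of _ 1]) auto
next
  case False
  then have p1: "p > 1" using p by simp
  have d: "\<And>x. x \<ge> 1 \<Longrightarrow> (jj m p has_real_derivative djj m p x) (at x)"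
    by (rule jj_deriv) simp
  define c where "c = max 1 ((p-2)*m)"
  have dpos: "djj m p r > 0" if "1 < r" "r < c" for r
  proof -
    have "r < (p-2)*m" using that by (auto simp: c_def)
    then show ?thesis using that p1 m unfolding djj_def by (intro mult_pos_pos) auto
  qed
  have dneg: "djj m p r < 0" if "r > c" for r
  proof -
    have "r > (p-2)*m" "r > 1" using that by (auto simp: c_def)
    then have "(p-1) * m * r powr (p-3) > 0" using p1 m by auto
    then show ?thesis using \<open>r > (p-2)*m\<close> unfolding djj_def by (simp add: mult_pos_neg)
  qed
  have j1: "jj m p 1 = (p-1)*m^2 - m - 1" by (simp add: jj_def)
  show ?thesis
  proof (cases "(m = 1 \<and> p \<le> 3) \<or> jj m p 1 < 0")
    case True
    have pm: "(p-2)*m \<le> 1"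
    proof (rule ccontr)
      assume "\<not> (p-2)*m \<le> 1"
      then have h: "(p-2)*m > 1" by simp
      have "(p-2)*m*m > 1 * m" using h m by (intro mult_strict_right_mono) auto
      moreover have "m*m \<ge> 1*1" by (rule mult_mono) (use m in auto)
      ultimately have "jj m p 1 > 0" using j1 m by (simp add: power2_eq_square algebra_simps)
      moreover have "\<not> (m = 1 \<and> p \<le> 3)" using h by auto
      ultimately show False using True by simp
    qed
    then have c1: "c = 1" by (simp add: c_def)
    have "jj m p 1 \<le> 0" using True j1 by auto
    then have "jj m p r < 0" if "r > 1" for r
      using SC1[OF d _ _ that] dneg c1 by auto
    moreover have "\<not> (m = 1 \<and> p > 3)" using True j1 by auto
    ultimately show ?thesis by (intro exI[of _ 1]) auto
  next
    case False
    then have j0: "jj m p 1 \<ge> 0" by simp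
    define R where "R = (p-1)*m + 1"
    have R1: "R > 1" using p1 m by (simp add: R_def)
    have "jj m p R = m * R powr (p-2) * ((p-1)*m - R) - 1"
      using powr_m1[of R "p-1"] R1 by (simp add: jj_def power2_eq_square algebra_simps)
    also have "\<dots> < 0"
    proof -
      have "m * R powr (p-2) > 0" using R1 m by simp
      then show ?thesis by (simp add: R_def)
    qed
    finally have jR: "jj m p R < 0" .
    obtain r0 where r0: "r0 \<ge> c" "jj m p r0 = 0" "\<forall>x. 1 < x \<and> x < r0 \<longrightarrow> jj m p x > 0"
        "\<forall>x. x > r0 \<longrightarrow> jj m p x < 0"
    proof -
      have "c \<ge> 1" by (simp add: c_def)
      from SC2[of 1 "jj m p" "djj m p" c, OF d this dpos dneg j0 R1 jR] that show thesis by blast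
    qed
    have "m = 1 \<and> p > 3 \<longrightarrow> r0 > 1"
    proof
      assume "m = 1 \<and> p > 3"
      then have "jj m p 1 > 0" using j1 by simp
      then show "r0 > 1" using r0 by (smt (verit) c_def max.cobounded1)
    qed
    then show ?thesis using r0 False by (intro exI[of _ r0]) (auto simp: c_def)
  qed
qed

lemma H_shape:
  assumes m: "m \<ge> 1" and p: "p \<ge> 1"
  shows "\<exists>r0\<ge>1. (\<forall>r. 1 < r \<and> r < r0 \<longrightarrow> hh m p r > 0) \<and> (\<forall>r>r0. hh m p r < 0)
     \<and> (\<not>(m = 1 \<and> p \<le> 3) \<longrightarrow> r0 > 1) \<and> (m = 1 \<and> p \<le> 3 \<longrightarrow> r0 = 1)"
proof -
  obtain r1 where r1: "r1 \<ge> 1" "\<forall>r. 1 < r \<and> r < r1 \<longrightarrow> jj m p r > 0" "\<forall>r>r1. jj m p r < 0"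
     "m = 1 \<and> p > 3 \<longrightarrow> r1 > 1" "m = 1 \<and> p \<le> 3 \<longrightarrow> r1 = 1"
    using J_shape[OF m p] by blast
  have d: "\<And>x. x \<ge> 1 \<Longrightarrow> (hh m p has_real_derivative p * jj m p x) (at x)"
    by (rule hh_deriv) simp
  have dpos: "p * jj m p r > 0" if "1 < r" "r < r1" for r using r1 that p by simp
  have dneg: "p * jj m p r < 0" if "r > r1" for r using r1 that p by (simp add: mult_pos_neg)
  have h1: "hh m p 1 = p * (m^2 - 1)" by (simp add: hh_def algebra_simps)
  show ?thesis
  proof (cases "m = 1 \<and> p \<le> 3")
    case True
    then have "hh m p r < 0" if "r > 1" for r
      using SC1[OF d _ _ that] dneg r1 h1 by auto
    then show ?thesis using True by (intro exI[of _ 1]) auto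
  next
    case False
    have h0: "hh m p 1 \<ge> 0" using h1 m p by simp
    define R where "R = p*m + 1"
    have R1: "R > 1" using p m by (simp add: R_def)
    have "hh m p R = m * R powr (p-1) * (p*m - R) + m - p * R"
      using powr_m1[of R p] R1 by (simp add: hh_def power2_eq_square algebra_simps)
    also have "\<dots> < 0"
    proof -
      have "m * R powr (p-1) * (p*m - R) < 0" using R1 m by (simp add: R_def mult_pos_neg)
      moreover have "m - p * R \<le> 0"
      proof -
        have "p * R \<ge> 1 * R" using p R1 by (intro mult_right_mono) auto
        moreover have "R \<ge> m"
        proof -
          have "p * m \<ge> 1 * m" using p m by (intro mult_right_mono) auto
          then show ?thesis by (simp add: R_def)
        qed
        ultimately show ?thesis by simp
      qed
      ultimately show ?thesis by simp
    qed
    finally have hR: "hh m p R < 0" .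
    obtain r0 where r0: "r0 \<ge> r1" "hh m p r0 = 0" "\<forall>x. 1 < x \<and> x < r0 \<longrightarrow> hh m p x > 0"
        "\<forall>x. x > r0 \<longrightarrow> hh m p x < 0"
      using SC2[OF d r1(1) dpos dneg h0 R1 hR] by blast
    have "r0 > 1"
    proof (cases "m = 1")
      case True
      then have "p > 3" using False by simp
      then show ?thesis using r1 r0 True by auto
    next
      case False
      then have "m > 1" using m by simp
      then have "m^2 > 1" by (smt (verit) one_less_power pos2)
      then have "hh m p 1 > 0" using h1 p by simp
      then show ?thesis using r0 r1 by (smt (verit))
    qed
    then show ?thesis using r0 r1 False by (intro exI[of _ r0]) auto
  qed
qed

definition symv :: "nat \<Rightarrow> real \<Rightarrow> nat \<Rightarrow> real" where
  "symv q u i = (if i = 1 then (1 + (real q - 1) * u) / real q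
                 else if i \<in> {2..q} then (1 - u) / real q else 0)"

definition Gs :: "real \<Rightarrow> nat \<Rightarrow> real \<Rightarrow> real \<Rightarrow> real" where
  "Gs \<beta> q z u = psi \<beta> q z ((1 + (real q - 1) * u) / real q) + (real q - 1) * psi \<beta> q z ((1 - u) / real q)"

lemma symv_sym:
  assumes "q \<ge> 1"
  shows "sym_point q u (symv q u)"
  unfolding sym_point_def using assms
  by (intro conjI allI impI bexI[of _ 1]) (auto simp: symv_def)

lemma sym_sum:
  fixes F :: "real \<Rightarrow> real"
  assumes "sym_point q u \<nu>" "q \<ge> 1"
  shows "(\<Sum>i=1..q. F (\<nu> i)) = F ((1 + (real q - 1) * u) / real q) + (real q - 1) * F ((1 - u) / real q)"
proof -
  obtain k where k: "k \<in> {1..q}" "\<nu> k = (1 + (real q - 1) * u) / real q"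
    and o: "\<forall>j\<in>{1..q} - {k}. \<nu> j = (1 - u) / real q"
    using assms unfolding sym_point_def by auto
  have "(\<Sum>i=1..q. F (\<nu> i)) = F (\<nu> k) + (\<Sum>i\<in>{1..q} - {k}. F (\<nu> i))"
    using k by (simp add: sum.remove)
  also have "(\<Sum>i\<in>{1..q} - {k}. F (\<nu> i)) = (\<Sum>i\<in>{1..q} - {k}. F ((1 - u) / real q))"
    using o by (intro sum.cong) auto
  also have "\<dots> = real (q - 1) * F ((1 - u) / real q)" using k by simp
  finally show ?thesis using k assms by (simp add: of_nat_diff)
qed

lemma sym_Gamma:
  assumes "sym_point q u \<nu>" "q \<ge> 1"
  shows "Gamma \<beta> q z \<nu> = Gs \<beta> q z u"
  unfolding Gamma_psi Gs_def using sym_sum[OF assms] by simp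

lemma sym_simplex:
  assumes "sym_point q u \<nu>" "q \<ge> 2" "0 \<le> u" "u \<le> 1"
  shows "\<nu> \<in> prob_simplex q"
proof -
  obtain k where k: "k \<in> {1..q}" "\<nu> k = (1 + (real q - 1) * u) / real q"
    and o: "\<forall>j\<in>{1..q} - {k}. \<nu> j = (1 - u) / real q"
    using assms unfolding sym_point_def by auto
  have q1: "real q \<ge> 1" using assms by simp
  have "0 \<le> (1 + (real q - 1) * u) / real q" using assms q1 by (intro divide_nonneg_pos) auto
  moreover have "0 \<le> (1 - u) / real q" using assms by simp
  ultimately have "\<forall>i\<in>{1..q}. 0 \<le> \<nu> i" using k o by (metis DiffI singletonD)
  moreover have "(\<Sum>i=1..q. \<nu> i) = 1"
    using sym_sum[OF assms(1), of "\<lambda>x. x"] assms q1 by (simp add: field_simps)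
  ultimately show ?thesis using assms(1) unfolding prob_simplex_def sym_point_def by auto
qed

lemma simplex_compact: "compact (prob_simplex q)"
proof -
  define T where "T = (\<lambda>i::nat. if i \<in> {1..q} then {0..1::real} else {0})"
  have "compactin (product_topology (\<lambda>i. euclidean) UNIV) (Pi\<^sub>E UNIV T)"
    by (subst compactin_PiE) (auto simp: T_def)
  then have c1: "compact (Pi UNIV T)"
    by (simp add: euclidean_product_topology PiE_UNIV_domain)
  have c2: "closed {\<nu>::nat\<Rightarrow>real. (\<Sum>i=1..q. \<nu> i) = 1}"
    by (intro closed_Collect_eq continuous_intros continuous_on_product_coordinates)
  have "prob_simplex q = Pi UNIV T \<inter> {\<nu>. (\<Sum>i=1..q. \<nu> i) = 1}"
  proof (intro set_eqI iffI)
    fix \<nu> assume "\<nu> \<in> prob_simplex q"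
    then show "\<nu> \<in> Pi UNIV T \<inter> {\<nu>. (\<Sum>i=1..q. \<nu> i) = 1}"
      using simplex_le1[of \<nu> q] unfolding prob_simplex_def T_def by auto
  next
    fix \<nu> assume "\<nu> \<in> Pi UNIV T \<inter> {\<nu>. (\<Sum>i=1..q. \<nu> i) = 1}"
    then show "\<nu> \<in> prob_simplex q"
      unfolding prob_simplex_def T_def Pi_def by (auto split: if_splits)
  qed
  then show ?thesis using compact_Int_closed[OF c1 c2] by simp
qed

lemma exists_min:
  assumes "q \<ge> 2" "z > 0"
  shows "\<exists>\<nu>. global_minimizer \<beta> q z \<nu>"
proof -
  have "continuous_on (prob_simplex q) (\<lambda>\<nu>. psi \<beta> q z (\<nu> i))" for i
  proof (rule continuous_on_compose2[OF psi_cont])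
    show "continuous_on (prob_simplex q) (\<lambda>\<nu>. \<nu> i)"
      by (rule continuous_on_subset[OF continuous_on_product_coordinates]) simp
    show "(\<lambda>\<nu>. \<nu> i) ` prob_simplex q \<subseteq> {0..}"
      by (auto simp: prob_simplex_def)
  qed (use assms in auto)
  then have "continuous_on (prob_simplex q) (Gamma \<beta> q z)"
    unfolding Gamma_psi[abs_def] by (intro continuous_on_sum) auto
  moreover have "symv q 0 \<in> prob_simplex q"
    using sym_simplex[OF symv_sym] assms by auto
  ultimately obtain \<nu> where "\<nu> \<in> prob_simplex q" "\<forall>\<mu>\<in>prob_simplex q. Gamma \<beta> q z \<nu> \<le> Gamma \<beta> q z \<mu>"
    using continuous_attains_inf[OF simplex_compact] by blast
  then show ?thesis unfolding global_minimizer_def by auto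
qed

lemma reduction:
  assumes q: "q \<ge> 2" and z: "z \<ge> 2" and b0: "\<beta> \<ge> 0"
  shows "global_minimizer \<beta> q z \<nu> \<longleftrightarrow>
    (\<exists>u\<in>{0..<1}. sym_point q u \<nu> \<and> (\<forall>v\<in>{0..1}. Gs \<beta> q z u \<le> Gs \<beta> q z v))"
proof
  assume gm: "global_minimizer \<beta> q z \<nu>"
  then obtain u where u: "u \<in> {0..<1}" "sym_point q u \<nu>" using part_i[OF q z b0] by blast
  have "Gs \<beta> q z u \<le> Gs \<beta> q z v" if v: "v \<in> {0..1}" for v
  proof -
    have "symv q v \<in> prob_simplex q" using sym_simplex[OF symv_sym] q v by auto
    then have "Gamma \<beta> q z \<nu> \<le> Gamma \<beta> q z (symv q v)" using gm by (auto simp: global_minimizer_def)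
    then show ?thesis using sym_Gamma[OF u(2)] sym_Gamma[OF symv_sym] q by auto
  qed
  then show "\<exists>u\<in>{0..<1}. sym_point q u \<nu> \<and> (\<forall>v\<in>{0..1}. Gs \<beta> q z u \<le> Gs \<beta> q z v)"
    using u by auto
next
  assume "\<exists>u\<in>{0..<1}. sym_point q u \<nu> \<and> (\<forall>v\<in>{0..1}. Gs \<beta> q z u \<le> Gs \<beta> q z v)"
  then obtain u where u: "u \<in> {0..<1}" "sym_point q u \<nu>" "\<forall>v\<in>{0..1}. Gs \<beta> q z u \<le> Gs \<beta> q z v"
    by blast
  obtain \<nu>0 where gm0: "global_minimizer \<beta> q z \<nu>0" using exists_min[of q z \<beta>] q z by auto
  then obtain u0 where u0: "u0 \<in> {0..<1}" "sym_point q u0 \<nu>0" using part_i[OF q z b0] by blast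
  have nu: "\<nu> \<in> prob_simplex q" using sym_simplex[OF u(2)] q u(1) by auto
  have "Gamma \<beta> q z \<nu> = Gs \<beta> q z u" using sym_Gamma[OF u(2)] q by simp
  also have "\<dots> \<le> Gs \<beta> q z u0" using u(3) u0(1) by auto
  also have "\<dots> = Gamma \<beta> q z \<nu>0" using sym_Gamma[OF u0(2)] q by simp
  finally show "global_minimizer \<beta> q z \<nu>"
    using gm0 nu unfolding global_minimizer_def by auto
qed

definition ww :: "real \<Rightarrow> real \<Rightarrow> real \<Rightarrow> real" where
  "ww m p u = m * (1 + m*u) powr p * (1 - u) + (1 + m*u) * (1 - u) powr p"

lemma ww_deriv_raw:
  assumes m: "m \<ge> 1" and p: "p \<ge> 1" and u: "0 \<le> u" "u < 1"
  shows "((\<lambda>u. m * (1 + m*u) powr p * (1 - u) + (1 + m*u) * (1 - u) powr p) has_real_derivative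
     m * ((p * (1 + m*u) powr (p - 1) * m) * (1 - u) + (1 + m*u) powr p * (- 1))
     + (m * (1 - u) powr p + (1 + m*u) * (p * (1 - u) powr (p - 1) * (- 1)))) (at u)"
proof -
  have B0: "1 + m*u > 0" using u m by (smt (verit) mult_nonneg_nonneg)
  have A0: "1 - u > 0" using u by linarith
  have dB: "((\<lambda>u. 1 + m*u) has_real_derivative m) (at u)"
    by (auto intro!: derivative_eq_intros)
  have dA: "((\<lambda>u. 1 - u) has_real_derivative -1) (at u)"
    by (auto intro!: derivative_eq_intros)
  have d1: "((\<lambda>u. (1 + m*u) powr p) has_real_derivative p * (1 + m*u) powr (p - 1) * m) (at u)"
    using DERIV_fun_powr[OF dB B0, of p] by simp
  have d2: "((\<lambda>u. (1 - u) powr p) has_real_derivative p * (1 - u) powr (p - 1) * (-1)) (at u)"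
    using DERIV_fun_powr[OF dA A0, of p] by simp
  show ?thesis
    using DERIV_add[OF DERIV_cmult[OF DERIV_mult[OF d1 dA], of m] DERIV_mult[OF dB d2]]
    by (simp add: algebra_simps)
qed

lemma ww_deriv:
  assumes m: "m \<ge> 1" and p: "p \<ge> 1" and u: "0 \<le> u" "u < 1"
  shows "(ww m p has_real_derivative (1-u) powr p * hh m p ((1+m*u)/(1-u))) (at u)"
proof -
  define A where "A = 1 - u"
  define B where "B = 1 + m*u"
  define x where "x = B / A"
  have A0: "A > 0" using u by (simp add: A_def)
  have B0: "B > 0" using u m unfolding B_def by (smt (verit) mult_nonneg_nonneg)
  have "m * ((p * (1 + m*u) powr (p - 1) * m) * (1 - u) + (1 + m*u) powr p * (- 1))
     + (m * (1 - u) powr p + (1 + m*u) * (p * (1 - u) powr (p - 1) * (- 1)))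
     = (1-u) powr p * hh m p ((1+m*u)/(1-u))"
  proof -
    have Bx: "B = x * A" using A0 by (simp add: x_def)
    have x0: "x > 0" using A0 B0 by (simp add: x_def)
    have e1: "B powr (p-1) = x powr (p-1) * A powr (p-1)" using Bx x0 A0 by (simp add: powr_mult)
    have e2: "B powr p = x powr p * A powr p" using Bx x0 A0 by (simp add: powr_mult)
    have e3: "A powr p = A powr (p-1) * A" using A0 by (rule powr_m1)
    have "m * ((p * B powr (p - 1) * m) * A + B powr p * (- 1))
     + (m * A powr p + B * (p * A powr (p - 1) * (- 1)))
     = A powr p * hh m p x"
      apply (unfold hh_def e1 e2 e3)
      apply (unfold Bx)
      by (simp add: algebra_simps power2_eq_square)
    then show ?thesis by (simp add: A_def B_def x_def)
  qed
  then show ?thesis using ww_deriv_raw[OF assms] unfolding ww_def[abs_def] by simp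
qed

lemma ratio_lt:
  fixes m u r0 :: real
  assumes m: "m \<ge> 1" and u: "0 \<le> u" "u < 1" and r: "r0 \<ge> 1"
  shows "(1+m*u)/(1-u) < r0 \<longleftrightarrow> u < (r0-1)/(r0+m)"
    and "(1+m*u)/(1-u) > r0 \<longleftrightarrow> u > (r0-1)/(r0+m)"
proof -
  have A0: "1 - u > 0" using u by linarith
  have D0: "r0 + m > 0" using m r by simp
  have "(1+m*u)/(1-u) < r0 \<longleftrightarrow> 1 + m*u < r0 * (1-u)" using A0 by (simp add: divide_less_eq)
  also have "\<dots> \<longleftrightarrow> u * (r0 + m) < r0 - 1" by (simp add: algebra_simps)
  also have "\<dots> \<longleftrightarrow> u < (r0-1)/(r0+m)" using D0 by (simp add: less_divide_eq)
  finally show "(1+m*u)/(1-u) < r0 \<longleftrightarrow> u < (r0-1)/(r0+m)" .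
  have "(1+m*u)/(1-u) > r0 \<longleftrightarrow> 1 + m*u > r0 * (1-u)" using A0 by (simp add: less_divide_eq)
  also have "\<dots> \<longleftrightarrow> u * (r0 + m) > r0 - 1" by (simp add: algebra_simps)
  also have "\<dots> \<longleftrightarrow> u > (r0-1)/(r0+m)" using D0 by (simp add: divide_less_eq)
  finally show "(1+m*u)/(1-u) > r0 \<longleftrightarrow> u > (r0-1)/(r0+m)" .
qed

lemma ratio_gt1:
  fixes m u :: real
  assumes m: "m \<ge> 1" and u: "0 < u" "u < 1"
  shows "(1+m*u)/(1-u) > 1"
proof -
  have "m*u > 0" using u m by simp
  then have "1 - u < 1 + m*u" using u by linarith
  then show ?thesis using u by simp
qed

lemma W_shape:
  assumes m: "m \<ge> 1" and p: "p \<ge> 1"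
  shows "\<exists>up. 0 \<le> up \<and> up < 1 \<and> (\<forall>x y. 0 \<le> x \<and> x < y \<and> y \<le> up \<longrightarrow> ww m p x < ww m p y)
     \<and> (\<forall>x y. up \<le> x \<and> x < y \<and> y < 1 \<longrightarrow> ww m p y < ww m p x)
     \<and> (\<not>(m = 1 \<and> p \<le> 3) \<longrightarrow> up > 0) \<and> (m = 1 \<and> p \<le> 3 \<longrightarrow> up = 0)"
proof -
  obtain r0 where r0: "r0 \<ge> 1" "\<forall>r. 1 < r \<and> r < r0 \<longrightarrow> hh m p r > 0" "\<forall>r>r0. hh m p r < 0"
     "\<not>(m = 1 \<and> p \<le> 3) \<longrightarrow> r0 > 1" "m = 1 \<and> p \<le> 3 \<longrightarrow> r0 = 1"
    using H_shape[OF m p] by blast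
  define up where "up = (r0-1)/(r0+m)"
  have up0: "0 \<le> up" using r0 m by (simp add: up_def)
  have up1: "up < 1" using r0 m by (simp add: up_def)
  have d: "\<And>u. 0 \<le> u \<Longrightarrow> u < 1 \<Longrightarrow> (ww m p has_real_derivative (1-u) powr p * hh m p ((1+m*u)/(1-u))) (at u)"
    using ww_deriv[OF m p] by blast
  have cont: "continuous_on {x..y} (ww m p)" if "0 \<le> x" "y < 1" for x y
    using that d by (intro DERIV_continuous_on[of _ _ "\<lambda>u. (1-u) powr p * hh m p ((1+m*u)/(1-u))"]
       has_field_derivative_at_within[OF d]) auto
  have inc: "ww m p x < ww m p y" if "0 \<le> x" "x < y" "y \<le> up" for x y
  proof (rule DERIV_pos_imp_increasing_open[OF that(2)])
    fix t assume t: "x < t" "t < y"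
    then have t01: "0 < t" "t < 1" using that up1 by auto
    have "(1+m*t)/(1-t) < r0" using ratio_lt(1)[OF m _ _ r0(1), of t] t01 t that by (simp add: up_def)
    moreover have "(1+m*t)/(1-t) > 1" using ratio_gt1[OF m t01] .
    ultimately have "hh m p ((1+m*t)/(1-t)) > 0" using r0 by blast
    then show "\<exists>y. (ww m p has_real_derivative y) (at t) \<and> 0 < y"
      using d[of t] t01 by (intro exI[of _ "(1-t) powr p * hh m p ((1+m*t)/(1-t))"]) auto
  next
    show "continuous_on {x..y} (ww m p)" using cont that up1 by auto
  qed
  have dec: "ww m p y < ww m p x" if "up \<le> x" "x < y" "y < 1" for x y
  proof (rule DERIV_neg_imp_decreasing_open[OF that(2)])
    fix t assume t: "x < t" "t < y"
    then have t01: "0 < t" "t < 1" using that up0 by auto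
    have "(1+m*t)/(1-t) > r0" using ratio_lt(2)[OF m _ _ r0(1), of t] t01 t that by (simp add: up_def)
    then have "hh m p ((1+m*t)/(1-t)) < 0" using r0 by blast
    moreover have "(1-t) powr p > 0" using t01 by simp
    ultimately show "\<exists>y. (ww m p has_real_derivative y) (at t) \<and> y < 0"
      using d[of t] t01 by (intro exI[of _ "(1-t) powr p * hh m p ((1+m*t)/(1-t))"]) (auto simp: mult_pos_neg)
  next
    show "continuous_on {x..y} (ww m p)" using cont that up0 by auto
  qed
  have "\<not>(m = 1 \<and> p \<le> 3) \<longrightarrow> up > 0" using r0 m by (simp add: up_def)
  moreover have "m = 1 \<and> p \<le> 3 \<longrightarrow> up = 0" using r0 by (simp add: up_def)
  ultimately show ?thesis using up0 up1 inc dec by blast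
qed

lemma W_qc:
  assumes m: "m \<ge> 1" and p: "p \<ge> 1" and xyz: "0 \<le> x" "x < y" "y < w" "w < 1"
  shows "ww m p y > min (ww m p x) (ww m p w)"
proof -
  obtain up where up: "0 \<le> up" "up < 1" "\<forall>x y. 0 \<le> x \<and> x < y \<and> y \<le> up \<longrightarrow> ww m p x < ww m p y"
     "\<forall>x y. up \<le> x \<and> x < y \<and> y < 1 \<longrightarrow> ww m p y < ww m p x"
    using W_shape[OF m p] by blast
  show ?thesis
  proof (cases "y \<le> up")
    case True
    then have "ww m p x < ww m p y" using up(3) xyz by blast
    then show ?thesis by simp
  next
    case False
    then have "ww m p w < ww m p y" using up(4) xyz by auto
    then show ?thesis by simp
  qed
qed

definition gg :: "real \<Rightarrow> nat \<Rightarrow> real \<Rightarrow> real \<Rightarrow> real" where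
  "gg \<beta> q z u = ln (1 + (real q - 1) * u) - ln (1 - u) + Delta \<beta> q z u"

definition kap :: "real \<Rightarrow> nat \<Rightarrow> real \<Rightarrow> real" where
  "kap \<beta> q z = \<beta> * (z - 1) / real q powr (z - 1)"

definition dgg :: "real \<Rightarrow> nat \<Rightarrow> real \<Rightarrow> real \<Rightarrow> real" where
  "dgg \<beta> q z u = (real q - kap \<beta> q z * ww (real q - 1) (z - 1) u) / ((1 - u) * (1 + (real q - 1) * u))"

context
  fixes q :: nat and z :: real
  assumes q: "q \<ge> 2" and z: "z \<ge> 2"
begin

lemma Qpos: "real q > 0" using q by simp
lemma m1: "real q - 1 \<ge> 1" using q by simp

lemma Bpos: "0 \<le> u \<Longrightarrow> 1 + (real q - 1) * u > 0"
  using m1 by (smt (verit) mult_nonneg_nonneg)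

lemma Gs_deriv:
  assumes u: "0 \<le> u" "u < 1"
  shows "(Gs \<beta> q z has_real_derivative ((real q - 1) / real q) * gg \<beta> q z u) (at u)"
proof -
  define Q where "Q = real q"
  define m where "m = real q - 1"
  define B where "B = 1 + m * u"
  define A where "A = 1 - u"
  have Q0: "Q > 0" using Qpos by (simp add: Q_def)
  have B0: "B > 0" using Bpos[OF u(1)] by (simp add: B_def m_def)
  have A0: "A > 0" using u by (simp add: A_def)
  have q0: "q > 0" using q by simp
  have z0: "z \<noteq> 0" using z by simp
  have dB: "((\<lambda>u. (1 + m * u) / Q) has_real_derivative m / Q) (at u)"
    using Q0 by (auto intro!: derivative_eq_intros)
  have dA: "((\<lambda>u. (1 - u) / Q) has_real_derivative -1 / Q) (at u)"
    using Q0 by (auto intro!: derivative_eq_intros)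
  have d1: "((\<lambda>u. psi \<beta> q z ((1 + m * u) / Q)) has_real_derivative
      (phi \<beta> z (B / Q) + ln (real q) + 1) * (m / Q)) (at u)"
    using DERIV_chain2[OF psi_deriv[OF _ q0 z0] dB, of \<beta>] B0 Q0 by (simp add: B_def)
  have d2: "((\<lambda>u. psi \<beta> q z ((1 - u) / Q)) has_real_derivative
      (phi \<beta> z (A / Q) + ln (real q) + 1) * (-1 / Q)) (at u)"
    using DERIV_chain2[OF psi_deriv[OF _ q0 z0] dA, of \<beta>] A0 Q0 by (simp add: A_def)
  have d: "(Gs \<beta> q z has_real_derivative
      (phi \<beta> z (B / Q) + ln (real q) + 1) * (m / Q) + m * ((phi \<beta> z (A / Q) + ln (real q) + 1) * (-1 / Q))) (at u)"
    unfolding Gs_def[abs_def] using DERIV_add[OF d1 DERIV_cmult[OF d2, of m]] by (simp add: m_def Q_def)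
  have "phi \<beta> z (B / Q) - phi \<beta> z (A / Q) = gg \<beta> q z u"
  proof -
    have "(B / Q) powr (z - 1) = B powr (z - 1) / Q powr (z - 1)" using B0 Q0 by (simp add: powr_divide)
    moreover have "(A / Q) powr (z - 1) = A powr (z - 1) / Q powr (z - 1)" using A0 Q0 by (simp add: powr_divide)
    moreover have "ln (B / Q) = ln B - ln Q" "ln (A / Q) = ln A - ln Q" using A0 B0 Q0 by (simp_all add: ln_div)
    ultimately show ?thesis
      unfolding phi_def gg_def Delta_def by (simp add: A_def B_def m_def Q_def algebra_simps diff_divide_distrib)
  qed
  moreover have "(phi \<beta> z (B / Q) + ln (real q) + 1) * (m / Q) + m * ((phi \<beta> z (A / Q) + ln (real q) + 1) * (-1 / Q))
     = (m / Q) * (phi \<beta> z (B / Q) - phi \<beta> z (A / Q))"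
    by (simp add: algebra_simps)
  ultimately show ?thesis using d by (simp add: m_def Q_def)
qed

lemma gg_deriv:
  assumes u: "0 \<le> u" "u < 1"
  shows "(gg \<beta> q z has_real_derivative dgg \<beta> q z u) (at u)"
proof -
  define Q where "Q = real q"
  define m where "m = real q - 1"
  define p where "p = z - 1"
  define B where "B = 1 + m * u"
  define A where "A = 1 - u"
  have Q0: "Q > 0" using Qpos by (simp add: Q_def)
  have B0: "B > 0" using Bpos[OF u(1)] by (simp add: B_def m_def)
  have A0: "A > 0" using u by (simp add: A_def)
  have dB: "((\<lambda>u. 1 + m * u) has_real_derivative m) (at u)"
    by (auto intro!: derivative_eq_intros)
  have dA: "((\<lambda>u. 1 - u) has_real_derivative -1) (at u)"
    by (auto intro!: derivative_eq_intros)
  have l1: "((\<lambda>u. ln (1 + m * u)) has_real_derivative 1 / B * m) (at u)"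
    using DERIV_chain2[OF DERIV_ln_divide dB] B0 by (simp add: B_def)
  have l2: "((\<lambda>u. ln (1 - u)) has_real_derivative 1 / A * (-1)) (at u)"
    using DERIV_chain2[OF DERIV_ln_divide dA] A0 by (simp add: A_def)
  have p1: "((\<lambda>u. (1 + m * u) powr p) has_real_derivative p * B powr (p - 1) * m) (at u)"
    using DERIV_fun_powr[OF dB, of p] B0 by (simp add: B_def)
  have p2: "((\<lambda>u. (1 - u) powr p) has_real_derivative p * A powr (p - 1) * (-1)) (at u)"
    using DERIV_fun_powr[OF dA, of p] A0 by (simp add: A_def)
  have dd: "(gg \<beta> q z has_real_derivative
      1 / B * m - 1 / A * (-1) + (- (\<beta> / Q powr p)) * (p * B powr (p - 1) * m - p * A powr (p - 1) * (-1))) (at u)"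
    unfolding gg_def[abs_def] Delta_def
    using DERIV_add[OF DERIV_diff[OF l1 l2] DERIV_cmult[OF DERIV_diff[OF p1 p2], of "- (\<beta> / Q powr p)"]]
    by (simp add: m_def Q_def p_def)
  have e1: "B powr p = B powr (p-1) * B" using B0 by (rule powr_m1)
  have e2: "A powr p = A powr (p-1) * A" using A0 by (rule powr_m1)
  have Qe: "Q = m * A + B" by (simp add: Q_def m_def A_def B_def algebra_simps)
  have Qp: "Q powr p > 0" using Q0 by simp
  define X where "X = B powr (p-1)"
  define Y where "Y = A powr (p-1)"
  define K where "K = \<beta> / Q powr p"
  have "(Q - K * p * (m * (X * B) * A + B * (Y * A))) / (A * B)
      = (m * A + B) / (A * B) - K * p * ((m * X * (B * A) + Y * (B * A)) / (A * B))"
    unfolding Qe by (simp add: diff_divide_distrib algebra_simps)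
  also have "(m * X * (B * A) + Y * (B * A)) / (A * B) = m * X + Y"
    using A0 B0 by (simp add: field_simps)
  also have "(m * A + B) / (A * B) = m / B + 1 / A"
    using A0 B0 by (simp add: field_simps)
  finally have "1 / B * m - 1 / A * (-1) + (- K) * (p * X * m - p * Y * (-1))
      = (Q - K * p * (m * (X * B) * A + B * (Y * A))) / (A * B)"
    by (simp add: algebra_simps)
  moreover have "K * p = \<beta> * p / Q powr p" by (simp add: K_def)
  ultimately have "1 / B * m - 1 / A * (-1) + (- (\<beta> / Q powr p)) * (p * B powr (p - 1) * m - p * A powr (p - 1) * (-1))
      = (Q - (\<beta> * p / Q powr p) * (m * (B powr (p-1) * B) * A + B * (A powr (p-1) * A))) / (A * B)"
    unfolding X_def Y_def K_def by simp
  then have "1 / B * m - 1 / A * (-1) + (- (\<beta> / Q powr p)) * (p * B powr (p - 1) * m - p * A powr (p - 1) * (-1))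
      = (Q - (\<beta> * p / Q powr p) * (m * B powr p * A + B * A powr p)) / (A * B)"
    by (simp only: e1 e2)
  also have "\<dots> = dgg \<beta> q z u"
    unfolding dgg_def kap_def ww_def by (simp add: Q_def m_def p_def A_def B_def algebra_simps)
  finally show ?thesis using dd by simp
qed

lemma gg0 [simp]: "gg \<beta> q z 0 = 0"
  by (simp add: gg_def Delta_def)

lemma MF_iff:
  assumes u: "0 \<le> u" "u < 1"
  shows "mean_field_eq \<beta> q z u \<longleftrightarrow> gg \<beta> q z u = 0"
proof -
  define m where "m = real q - 1"
  define e where "e = exp (Delta \<beta> q z u)"
  define B where "B = 1 + m * u"
  define A where "A = 1 - u"
  have B0: "B > 0" using Bpos[OF u(1)] by (simp add: B_def m_def)
  have A0: "A > 0" using u by (simp add: A_def)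
  have e0: "e > 0" by (simp add: e_def)
  have m0: "m \<ge> 1" using m1 by (simp add: m_def)
  have "m * e > 0" using e0 m0 by simp
  then have D0: "1 + m * e > 0" by linarith
  have "mean_field_eq \<beta> q z u \<longleftrightarrow> u = (1 - e) / (1 + m * e)"
    unfolding mean_field_eq_def e_def m_def by (rule refl)
  also have "\<dots> \<longleftrightarrow> u * (1 + m * e) = 1 - e" using D0 by (simp add: eq_divide_eq)
  also have "\<dots> \<longleftrightarrow> e * B = A" unfolding A_def B_def by (simp add: algebra_simps)
  also have "\<dots> \<longleftrightarrow> e = A / B" using B0 by (simp add: eq_divide_eq)
  also have "\<dots> \<longleftrightarrow> Delta \<beta> q z u = ln (A / B)"
  proof
    assume "e = A / B"
    then have "ln e = ln (A / B)" by simp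
    then show "Delta \<beta> q z u = ln (A / B)" by (simp add: e_def)
  next
    assume "Delta \<beta> q z u = ln (A / B)"
    then have "e = exp (ln (A / B))" by (simp add: e_def)
    also have "\<dots> = A / B" using A0 B0 by simp
    finally show "e = A / B" .
  qed
  also have "\<dots> \<longleftrightarrow> gg \<beta> q z u = 0"
  proof -
    have "ln (A / B) = ln A - ln B" using A0 B0 by (simp add: ln_div)
    then show ?thesis unfolding gg_def A_def B_def m_def by auto
  qed
  finally show ?thesis .
qed

lemma MF_1: "\<not> mean_field_eq \<beta> q z 1"
proof
  assume a: "mean_field_eq \<beta> q z 1"
  have z1: "z - 1 > 0" using z by simp
  have dl: "Delta \<beta> q z 1 = - \<beta>"
    using Qpos z1 by (simp add: Delta_def)
  have "1 = (1 - exp (Delta \<beta> q z 1)) / (1 + (real q - 1) * exp (Delta \<beta> q z 1))"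
    using a unfolding mean_field_eq_def by assumption
  then have eq0: "1 = (1 - exp (-\<beta>)) / (1 + (real q - 1) * exp (-\<beta>))"
    unfolding dl .
  define D where "D = 1 + (real q - 1) * exp (-\<beta>)"
  have "(real q - 1) * exp (-\<beta>) > 0" using m1 by simp
  then have D0: "D > 0" by (simp add: D_def)
  have "D = D * 1" by simp
  also have "\<dots> = D * ((1 - exp (-\<beta>)) / D)" using eq0 by (simp add: D_def)
  also have "\<dots> = 1 - exp (-\<beta>)" using D0 by simp
  finally have "1 + (real q - 1) * exp (-\<beta>) = 1 - exp (-\<beta>)" by (simp add: D_def)
  then have "real q * exp (-\<beta>) = 0" by (simp add: algebra_simps)
  then show False using Qpos by simp
qed

lemma Gs_cont: "continuous_on {0..1} (Gs \<beta> q z)"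
proof -
  have c: "continuous_on {0..} (psi \<beta> q z)" using psi_cont[of q z \<beta>] q z by simp
  have c1: "continuous_on {0..1} (\<lambda>u. psi \<beta> q z ((1 + (real q - 1) * u) / real q))"
  proof (rule continuous_on_compose2[OF c])
    show "continuous_on {0..1} (\<lambda>u. (1 + (real q - 1) * u) / real q)"
      by (intro continuous_intros) (use Qpos in auto)
    show "(\<lambda>u. (1 + (real q - 1) * u) / real q) ` {0..1} \<subseteq> {0..}"
      using Bpos Qpos by (auto intro: less_imp_le)
  qed
  have c2: "continuous_on {0..1} (\<lambda>u. psi \<beta> q z ((1 - u) / real q))"
  proof (rule continuous_on_compose2[OF c])
    show "continuous_on {0..1} (\<lambda>u. (1 - u) / real q)"
      by (intro continuous_intros) (use Qpos in auto)
    show "(\<lambda>u. (1 - u) / real q) ` {0..1} \<subseteq> {0..}"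
      using Qpos by auto
  qed
  show ?thesis unfolding Gs_def[abs_def]
    by (intro continuous_on_add continuous_on_mult_left c1 c2)
qed

lemma dgg_neg_iff:
  assumes "0 \<le> u" "u < 1"
  shows "dgg \<beta> q z u < 0 \<longleftrightarrow> kap \<beta> q z * ww (real q - 1) (z - 1) u > real q"
    and "dgg \<beta> q z u > 0 \<longleftrightarrow> kap \<beta> q z * ww (real q - 1) (z - 1) u < real q"
proof -
  have "(1 - u) * (1 + (real q - 1) * u) > 0" using assms Bpos by simp
  then show "dgg \<beta> q z u < 0 \<longleftrightarrow> kap \<beta> q z * ww (real q - 1) (z - 1) u > real q"
    and "dgg \<beta> q z u > 0 \<longleftrightarrow> kap \<beta> q z * ww (real q - 1) (z - 1) u < real q"
    unfolding dgg_def by (simp_all add: divide_less_0_iff zero_less_divide_iff)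
qed

lemma Gs_inc:
  assumes "0 \<le> a" "a < b" "b \<le> 1" "\<And>t. a < t \<Longrightarrow> t < b \<Longrightarrow> gg \<beta> q z t > 0"
  shows "Gs \<beta> q z a < Gs \<beta> q z b"
proof (rule DERIV_pos_imp_increasing_open[OF assms(2)])
  fix t assume t: "a < t" "t < b"
  have "(real q - 1) / real q > 0" using m1 Qpos by simp
  then have pos: "(real q - 1) / real q * gg \<beta> q z t > 0" using mult_pos_pos assms(4)[OF t] by blast
  have "(Gs \<beta> q z has_real_derivative (real q - 1) / real q * gg \<beta> q z t) (at t)"
    using t assms by (intro Gs_deriv) auto
  then show "\<exists>y. (Gs \<beta> q z has_real_derivative y) (at t) \<and> 0 < y"
    using pos by blast
next
  show "continuous_on {a..b} (Gs \<beta> q z)"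
    by (rule continuous_on_subset[OF Gs_cont]) (use assms in auto)
qed

lemma Gs_dec:
  assumes "0 \<le> a" "a < b" "b \<le> 1" "\<And>t. a < t \<Longrightarrow> t < b \<Longrightarrow> gg \<beta> q z t < 0"
  shows "Gs \<beta> q z b < Gs \<beta> q z a"
proof (rule DERIV_neg_imp_decreasing_open[OF assms(2)])
  fix t assume t: "a < t" "t < b"
  have "(real q - 1) / real q > 0" using m1 Qpos by simp
  then have neg: "(real q - 1) / real q * gg \<beta> q z t < 0" using mult_pos_neg assms(4)[OF t] by blast
  have "(Gs \<beta> q z has_real_derivative (real q - 1) / real q * gg \<beta> q z t) (at t)"
    using t assms by (intro Gs_deriv) auto
  then show "\<exists>y. (Gs \<beta> q z has_real_derivative y) (at t) \<and> y < 0"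
    using neg by blast
next
  show "continuous_on {a..b} (Gs \<beta> q z)"
    by (rule continuous_on_subset[OF Gs_cont]) (use assms in auto)
qed

lemma gg_cont:
  assumes "0 \<le> a" "b < 1"
  shows "continuous_on {a..b} (gg \<beta> q z)"
  using assms by (intro DERIV_continuous_on[of _ _ "dgg \<beta> q z"] has_field_derivative_at_within[OF gg_deriv]) auto

lemma gg_inc:
  assumes "0 \<le> a" "a < b" "b < 1" "\<And>t. a < t \<Longrightarrow> t < b \<Longrightarrow> dgg \<beta> q z t > 0"
  shows "gg \<beta> q z a < gg \<beta> q z b"
proof (rule DERIV_pos_imp_increasing_open[OF assms(2)])
  fix t assume t: "a < t" "t < b"
  then show "\<exists>y. (gg \<beta> q z has_real_derivative y) (at t) \<and> 0 < y"
    using gg_deriv[of t \<beta>] assms by (intro exI[of _ "dgg \<beta> q z t"]) auto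
qed (use gg_cont assms in auto)

lemma gg_dec:
  assumes "0 \<le> a" "a < b" "b < 1" "\<And>t. a < t \<Longrightarrow> t < b \<Longrightarrow> dgg \<beta> q z t < 0"
  shows "gg \<beta> q z b < gg \<beta> q z a"
proof (rule DERIV_neg_imp_decreasing_open[OF assms(2)])
  fix t assume t: "a < t" "t < b"
  then show "\<exists>y. (gg \<beta> q z has_real_derivative y) (at t) \<and> y < 0"
    using gg_deriv[of t \<beta>] assms by (intro exI[of _ "dgg \<beta> q z t"]) auto
qed (use gg_cont assms in auto)

end

definition En :: "nat \<Rightarrow> real \<Rightarrow> real \<Rightarrow> real" where
  "En q z u = (Gs 0 q z u - Gs 1 q z u) - (Gs 0 q z 0 - Gs 1 q z 0)"
definition Ent :: "nat \<Rightarrow> real \<Rightarrow> real \<Rightarrow> real" where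
  "Ent q z u = Gs 0 q z u - Gs 0 q z 0"
definition SS :: "nat \<Rightarrow> real \<Rightarrow> real \<Rightarrow> real" where
  "SS q z u = Ent q z u / En q z u"
definition bc :: "nat \<Rightarrow> real \<Rightarrow> real" where
  "bc q z = Inf (SS q z ` {0<..1})"

lemma Gs_lin: "Gs \<beta> q z u = Gs 0 q z u + \<beta> * (Gs 1 q z u - Gs 0 q z u)"
  unfolding Gs_def psi_def by (simp add: algebra_simps)

lemma Gs_gap: "Gs \<beta> q z u - Gs \<beta> q z 0 = Ent q z u - \<beta> * En q z u"
  unfolding Ent_def En_def using Gs_lin[of \<beta> q z u] Gs_lin[of \<beta> q z 0] by (simp add: algebra_simps)

context
  fixes q :: nat and z :: real
  assumes q: "q \<ge> 2" and z: "z \<ge> 2"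
begin

lemma En_pos:
  assumes u: "0 < u" "u \<le> 1"
  shows "En q z u > 0"
proof -
  define f where "f = (\<lambda>u. Gs 1 q z u - Gs 0 q z u)"
  have "f u < f 0"
  proof (rule DERIV_neg_imp_decreasing_open[OF u(1)])
    fix t assume t: "0 < t" "t < u"
    define B where "B = 1 + (real q - 1) * t"
    define A where "A = 1 - t"
    have "(real q - 1) * t > 0" using m1[OF q z] t by simp
    then have A0: "A > 0" "A < B" using t u unfolding A_def B_def by auto
    have "A powr (z - 1) < B powr (z - 1)" using A0 z by (intro powr_less_mono2) auto
    then have Dl: "Delta 1 q z t < 0"
      unfolding Delta_def using Qpos[OF q z] by (simp add: A_def B_def)
    have D0: "Delta 0 q z t = 0" by (simp add: Delta_def)
    have "(f has_real_derivative ((real q - 1) / real q) * gg 1 q z t - ((real q - 1) / real q) * gg 0 q z t) (at t)"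
      unfolding f_def using t u by (intro DERIV_diff Gs_deriv[OF q z]) auto
    moreover have "((real q - 1) / real q) * gg 1 q z t - ((real q - 1) / real q) * gg 0 q z t
        = ((real q - 1) / real q) * Delta 1 q z t"
      unfolding gg_def D0 by (simp add: algebra_simps)
    moreover have "((real q - 1) / real q) * Delta 1 q z t < 0"
    proof -
      have "(real q - 1) / real q > 0" using m1[OF q z] Qpos[OF q z] by simp
      from mult_pos_neg[OF this Dl] show ?thesis .
    qed
    ultimately show "\<exists>y. (f has_real_derivative y) (at t) \<and> y < 0" by auto
  next
    show "continuous_on {0..u} f"
    proof -
      have "continuous_on {0..u} (Gs \<beta>' q z)" for \<beta>'
        by (rule continuous_on_subset[OF Gs_cont[OF q z]]) (use u in auto)
      then show ?thesis unfolding f_def by (intro continuous_on_diff)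
    qed
  qed
  then show ?thesis unfolding En_def f_def by simp
qed

lemma gap_le_iff:
  assumes u: "0 < u" "u \<le> 1"
  shows "Gs \<beta> q z u \<le> Gs \<beta> q z 0 \<longleftrightarrow> SS q z u \<le> \<beta>"
    and "Gs \<beta> q z u < Gs \<beta> q z 0 \<longleftrightarrow> SS q z u < \<beta>"
proof -
  have E: "En q z u > 0" using En_pos[OF u] .
  have "Gs \<beta> q z u \<le> Gs \<beta> q z 0 \<longleftrightarrow> Ent q z u \<le> \<beta> * En q z u" using Gs_gap[of \<beta> q z u] by linarith
  also have "\<dots> \<longleftrightarrow> SS q z u \<le> \<beta>" using E by (simp add: SS_def divide_le_eq)
  finally show "Gs \<beta> q z u \<le> Gs \<beta> q z 0 \<longleftrightarrow> SS q z u \<le> \<beta>" .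
  have "Gs \<beta> q z u < Gs \<beta> q z 0 \<longleftrightarrow> Ent q z u < \<beta> * En q z u" using Gs_gap[of \<beta> q z u] by linarith
  also have "\<dots> \<longleftrightarrow> SS q z u < \<beta>" using E by (simp add: SS_def divide_less_eq)
  finally show "Gs \<beta> q z u < Gs \<beta> q z 0 \<longleftrightarrow> SS q z u < \<beta>" .
qed

lemma ww_bound:
  assumes u: "0 \<le> u" "u < 1"
  shows "ww (real q - 1) (z - 1) u \<le> real q powr (z - 1) * real q"
proof -
  define Q where "Q = real q"
  define m where "m = real q - 1"
  define p where "p = z - 1"
  have Q1: "Q \<ge> 1" "m \<ge> 1" "Q = m + 1" using q by (auto simp: Q_def m_def)
  have p1: "p \<ge> 1" using z by (simp add: p_def)
  have B: "1 + m * u \<le> Q" "0 \<le> 1 + m * u" using u Q1 by (auto simp: mult_left_le)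
  have A: "1 - u \<le> 1" "0 \<le> 1 - u" using u by auto
  have "(1 + m * u) powr p \<le> Q powr p" using B p1 by (intro powr_mono2) auto
  moreover have "(1 - u) powr p \<le> 1" using A p1 by (intro powr_le_1) auto
  ultimately have "m * (1 + m * u) powr p * (1 - u) + (1 + m * u) * (1 - u) powr p \<le> m * Q powr p * 1 + Q * 1"
    using A B Q1 by (intro add_mono mult_mono) auto
  also have "Q \<le> Q powr p" using Q1 p1 powr_mono[of 1 p Q] by simp
  then have "m * Q powr p * 1 + Q * 1 \<le> Q powr p * Q" using Q1 by (simp add: algebra_simps)
  finally show ?thesis unfolding ww_def Q_def m_def p_def .
qed

lemma small_beta:
  assumes b: "0 \<le> \<beta>" "\<beta> * (z - 1) < 1" and u: "0 < u" "u \<le> 1"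
  shows "Gs \<beta> q z 0 < Gs \<beta> q z u"
proof -
  have dpos: "dgg \<beta> q z t > 0" if t: "0 \<le> t" "t < 1" for t
  proof -
    have Qp: "real q powr (z - 1) > 0" using Qpos[OF q z] by simp
    have k0: "kap \<beta> q z \<ge> 0" using b z Qp by (simp add: kap_def)
    have "kap \<beta> q z * ww (real q - 1) (z - 1) t \<le> kap \<beta> q z * (real q powr (z - 1) * real q)"
      using ww_bound[OF t] k0 by (rule mult_left_mono)
    also have "\<dots> = \<beta> * (z - 1) * real q" using Qp by (simp add: kap_def)
    also have "\<dots> < real q" using b Qpos[OF q z] by simp
    finally show ?thesis using dgg_neg_iff(2)[OF q z t] by simp
  qed
  have ggpos: "gg \<beta> q z t > 0" if t: "0 < t" "t < 1" for t
  proof -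
    have "gg \<beta> q z 0 < gg \<beta> q z t"
      by (rule gg_inc[OF q z order_refl t(1) t(2)]) (use dpos t in auto)
    then show ?thesis using gg0[OF q z, of \<beta>] by simp
  qed
  show ?thesis using Gs_inc[OF q z order_refl u(1) u(2)] ggpos u by auto
qed

lemma SS_lower:
  assumes u: "0 < u" "u \<le> 1"
  shows "SS q z u \<ge> 1 / (z - 1)"
proof (rule ccontr)
  assume "\<not> SS q z u \<ge> 1 / (z - 1)"
  then have lt: "SS q z u < 1 / (z - 1)" by simp
  define \<beta> where "\<beta> = max 0 (SS q z u)"
  have z1: "z - 1 > 0" using z by simp
  have "\<beta> * (z - 1) < 1" using lt z1 by (auto simp: \<beta>_def max_def field_simps)
  then have "Gs \<beta> q z 0 < Gs \<beta> q z u" using small_beta[of \<beta> u] u by (simp add: \<beta>_def)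
  moreover have "Gs \<beta> q z u \<le> Gs \<beta> q z 0" using gap_le_iff(1)[OF u] by (simp add: \<beta>_def)
  ultimately show False by simp
qed

lemma bc_bdd: "bdd_below (SS q z ` {0<..1})"
  unfolding bdd_below_def using SS_lower by (intro exI[of _ "1/(z-1)"]) auto

lemma bc_pos: "bc q z \<ge> 1 / (z - 1)"
  unfolding bc_def by (rule cInf_greatest) (use SS_lower in auto)

lemma bc_pos': "bc q z > 0"
  using bc_pos z by (smt (verit) divide_pos_pos)

lemma below_bc:
  assumes "\<beta> < bc q z" "0 < u" "u \<le> 1"
  shows "Gs \<beta> q z 0 < Gs \<beta> q z u"
proof -
  have "bc q z \<le> SS q z u" unfolding bc_def using assms bc_bdd by (intro cInf_lower) auto
  then show ?thesis using gap_le_iff(1)[OF assms(2,3), of \<beta>] assms by auto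
qed

lemma at_bc:
  assumes "\<beta> \<le> bc q z" "0 < u" "u \<le> 1"
  shows "Gs \<beta> q z 0 \<le> Gs \<beta> q z u"
proof -
  have "bc q z \<le> SS q z u" unfolding bc_def using assms bc_bdd by (intro cInf_lower) auto
  then show ?thesis using gap_le_iff(2)[OF assms(2,3), of \<beta>] assms by auto
qed

lemma above_bc:
  assumes "\<beta> > bc q z"
  shows "\<exists>u. 0 < u \<and> u \<le> 1 \<and> Gs \<beta> q z u < Gs \<beta> q z 0"
proof -
  have "Inf (SS q z ` {0<..1}) < \<beta>" using assms by (simp add: bc_def)
  then obtain x where "x \<in> SS q z ` {0<..1}" "x < \<beta>"
    using cInf_less_iff[OF _ bc_bdd] by auto
  then obtain u where "u \<in> {0<..1}" "SS q z u < \<beta>" by auto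
  then show ?thesis using gap_le_iff(2)[of u \<beta>] by auto
qed

end

context
  fixes q :: nat and z :: real
  assumes q: "q \<ge> 2" and z: "z \<ge> 2"
begin

lemma kap_pos: "\<beta> > 0 \<Longrightarrow> kap \<beta> q z > 0"
  using z Qpos[OF q z] by (simp add: kap_def)

lemma cpos: "(real q - 1) / real q > 0" using m1[OF q z] Qpos[OF q z] by simp

lemma min_struct:
  assumes b: "\<beta> > 0" and u0: "0 < u0" "u0 < 1"
    and gm: "\<forall>v\<in>{0..1}. Gs \<beta> q z u0 \<le> Gs \<beta> q z v" and lt: "Gs \<beta> q z u0 < Gs \<beta> q z 0"
  shows "gg \<beta> q z u0 = 0"
    and "\<exists>x1 x2. 0 < x1 \<and> x1 < x2 \<and> x2 < u0 \<and> dgg \<beta> q z x1 < 0 \<and> dgg \<beta> q z x2 > 0"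
    and "\<forall>v. u0 < v \<and> v < 1 \<longrightarrow> gg \<beta> q z v > 0"
proof -
  define c where "c = (real q - 1) / real q"
  have c0: "c > 0" using cpos by (simp add: c_def)
  have dG: "\<And>t. 0 \<le> t \<Longrightarrow> t < 1 \<Longrightarrow> (Gs \<beta> q z has_real_derivative c * gg \<beta> q z t) (at t)"
    unfolding c_def by (rule Gs_deriv[OF q z])
  have dg: "\<And>t. 0 \<le> t \<Longrightarrow> t < 1 \<Longrightarrow> (gg \<beta> q z has_real_derivative dgg \<beta> q z t) (at t)"
    by (rule gg_deriv[OF q z])
  have "c * gg \<beta> q z u0 = 0"
  proof (rule DERIV_local_min[OF dG[OF _ u0(2)]])
    show "0 \<le> u0" using u0 by simp
    show "0 < min u0 (1 - u0)" using u0 by simp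
    show "\<forall>y. \<bar>u0 - y\<bar> < min u0 (1 - u0) \<longrightarrow> Gs \<beta> q z u0 \<le> Gs \<beta> q z y"
      using gm by (auto simp: abs_if split: if_splits)
  qed
  then show g0: "gg \<beta> q z u0 = 0" using c0 by simp
  obtain s where s: "0 < s" "s < u0" "Gs \<beta> q z u0 - Gs \<beta> q z 0 = (u0 - 0) * (c * gg \<beta> q z s)"
    using MVT2[OF u0(1), of "Gs \<beta> q z" "\<lambda>t. c * gg \<beta> q z t"] dG u0 by auto
  have gs: "gg \<beta> q z s < 0"
  proof -
    have "u0 * (c * gg \<beta> q z s) < 0" using s lt by simp
    then have "c * gg \<beta> q z s < 0" using u0 by (simp add: mult_less_0_iff)
    then show ?thesis using c0 by (simp add: mult_less_0_iff)
  qed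
  obtain x1 where x1: "0 < x1" "x1 < s" "gg \<beta> q z s - gg \<beta> q z 0 = (s - 0) * dgg \<beta> q z x1"
    using MVT2[OF s(1), of "gg \<beta> q z" "dgg \<beta> q z"] dg s u0 by auto
  have d1: "dgg \<beta> q z x1 < 0"
    using x1 gs s gg0[OF q z, of \<beta>] by (simp add: mult_less_0_iff)
  obtain x2 where x2: "s < x2" "x2 < u0" "gg \<beta> q z u0 - gg \<beta> q z s = (u0 - s) * dgg \<beta> q z x2"
    using MVT2[OF s(2), of "gg \<beta> q z" "dgg \<beta> q z"] dg s u0 by auto
  have d2: "dgg \<beta> q z x2 > 0"
  proof -
    have "(u0 - s) * dgg \<beta> q z x2 > 0" using x2(3) gs g0 by simp
    moreover have "u0 - s > 0" using s by simp
    ultimately show ?thesis by (simp add: zero_less_mult_iff)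
  qed
  show "\<exists>x1 x2. 0 < x1 \<and> x1 < x2 \<and> x2 < u0 \<and> dgg \<beta> q z x1 < 0 \<and> dgg \<beta> q z x2 > 0"
    using x1 x2 d1 d2 s by (intro exI[of _ x1] exI[of _ x2]) auto
  show "\<forall>v. u0 < v \<and> v < 1 \<longrightarrow> gg \<beta> q z v > 0"
  proof (intro allI impI)
    fix v assume v: "u0 < v \<and> v < 1"
    show "gg \<beta> q z v > 0"
    proof (rule ccontr)
      assume "\<not> gg \<beta> q z v > 0"
      then have gv: "gg \<beta> q z v \<le> 0" by simp
      obtain x3 where x3: "u0 < x3" "x3 < v" "gg \<beta> q z v - gg \<beta> q z u0 = (v - u0) * dgg \<beta> q z x3"
        using MVT2[of u0 v "gg \<beta> q z" "dgg \<beta> q z"] dg v u0 by auto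
      have d3: "\<not> dgg \<beta> q z x3 > 0"
      proof
        assume "dgg \<beta> q z x3 > 0"
        moreover have "v - u0 > 0" using x3 by simp
        ultimately have "(v - u0) * dgg \<beta> q z x3 > 0" by simp
        then show False using x3(3) gv g0 by simp
      qed
      define W where "W = ww (real q - 1) (z - 1)"
      define k where "k = kap \<beta> q z"
      have k0: "k > 0" using kap_pos[OF b] by (simp add: k_def)
      have w1: "k * W x1 > real q" using d1 dgg_neg_iff(1)[OF q z, of x1 \<beta>] x1 s u0 by (simp add: W_def k_def)
      have w2: "k * W x2 < real q" using d2 dgg_neg_iff(2)[OF q z, of x2 \<beta>] x2 s u0 by (simp add: W_def k_def)
      have w3: "k * W x3 \<ge> real q" using d3 dgg_neg_iff(2)[OF q z, of x3 \<beta>] x3 v u0 by (simp add: W_def k_def)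
      have "W x2 > min (W x1) (W x3)"
        unfolding W_def using x1 x2 x3 s v m1[OF q z] z by (intro W_qc) auto
      then have "k * W x2 > k * min (W x1) (W x3)" using k0 by simp
      moreover have "k * min (W x1) (W x3) \<ge> real q" using w1 w3 k0
        by (cases "W x1 \<le> W x3") (auto simp: min_def)
      ultimately show False using w2 by simp
    qed
  qed
qed

lemma umf_eq:
  assumes u0: "0 < u0" "u0 < 1" and g0: "gg \<beta> q z u0 = 0"
    and pos: "\<forall>v. u0 < v \<and> v < 1 \<longrightarrow> gg \<beta> q z v > 0"
  shows "u_mf \<beta> q z = u0"
  unfolding u_mf_def
proof (rule cSup_eq_maximum)
  show "u0 \<in> {u \<in> {0..1}. mean_field_eq \<beta> q z u}"
    using u0 g0 MF_iff[OF q z, of u0 \<beta>] by auto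
  fix x assume x: "x \<in> {u \<in> {0..1}. mean_field_eq \<beta> q z u}"
  show "x \<le> u0"
  proof (cases "x = 1")
    case True then show ?thesis using x MF_1[OF q z] by auto
  next
    case False
    then have "x < 1" "0 \<le> x" using x by auto
    then have "gg \<beta> q z x = 0" using x MF_iff[OF q z, of x \<beta>] by auto
    show ?thesis
    proof (rule ccontr)
      assume "\<not> x \<le> u0"
      then have "gg \<beta> q z x > 0" using pos \<open>x < 1\<close> by auto
      then show False using \<open>gg \<beta> q z x = 0\<close> by simp
    qed
  qed
qed

lemma part_ii_below:
  assumes b: "0 \<le> \<beta>" "\<beta> < bc q z"
  shows "global_minimizer \<beta> q z \<nu> \<longleftrightarrow> sym_point q 0 \<nu>"
proof -
  have lt: "\<And>u. 0 < u \<Longrightarrow> u \<le> 1 \<Longrightarrow> Gs \<beta> q z 0 < Gs \<beta> q z u" using below_bc[OF q z b(2)] by blast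
  show ?thesis
  proof
    assume "global_minimizer \<beta> q z \<nu>"
    then obtain u where u: "u \<in> {0..<1}" "sym_point q u \<nu>" "\<forall>v\<in>{0..1}. Gs \<beta> q z u \<le> Gs \<beta> q z v"
      using reduction[OF q z b(1)] by blast
    have "u = 0"
    proof (rule ccontr)
      assume "u \<noteq> 0"
      then have "Gs \<beta> q z 0 < Gs \<beta> q z u" using lt u(1) by auto
      moreover have "Gs \<beta> q z u \<le> Gs \<beta> q z 0" using bspec[OF u(3), of 0] by simp
      ultimately show False by simp
    qed
    then show "sym_point q 0 \<nu>" using u by simp
  next
    assume s: "sym_point q 0 \<nu>"
    have "\<forall>v\<in>{0..1}. Gs \<beta> q z 0 \<le> Gs \<beta> q z v"
    proof
      fix v :: real assume "v \<in> {0..1}"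
      then show "Gs \<beta> q z 0 \<le> Gs \<beta> q z v" using lt[of v] by (cases "v = 0") auto
    qed
    then show "global_minimizer \<beta> q z \<nu>"
      using reduction[OF q z b(1)] s by auto
  qed
qed

lemma part_ii_above:
  assumes b: "\<beta> > bc q z"
  shows "0 < u_mf \<beta> q z" "u_mf \<beta> q z < 1"
    and "\<forall>\<nu>. global_minimizer \<beta> q z \<nu> \<longleftrightarrow> sym_point q (u_mf \<beta> q z) \<nu>"
    and "gg \<beta> q z (u_mf \<beta> q z) = 0"
    and "\<exists>x1 x2. 0 < x1 \<and> x1 < x2 \<and> x2 < u_mf \<beta> q z \<and> dgg \<beta> q z x1 < 0 \<and> dgg \<beta> q z x2 > 0"
proof -
  have b0: "\<beta> > 0" using b bc_pos'[OF q z] by simp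
  obtain \<nu>0 where "global_minimizer \<beta> q z \<nu>0" using exists_min[of q z \<beta>] q z by auto
  then obtain u0 where u0: "u0 \<in> {0..<1}" "\<forall>v\<in>{0..1}. Gs \<beta> q z u0 \<le> Gs \<beta> q z v"
    using reduction[OF q z, of \<beta> \<nu>0] b0 by auto
  obtain u' where u': "0 < u'" "u' \<le> 1" "Gs \<beta> q z u' < Gs \<beta> q z 0" using above_bc[OF q z b] by blast
  have lt: "Gs \<beta> q z u0 < Gs \<beta> q z 0" using bspec[OF u0(2), of u'] u' by auto
  then have u00: "u0 > 0" using u0(1) by (cases "u0 = 0") auto
  have u01: "u0 < 1" using u0 by simp
  note ms = min_struct[OF b0 u00 u01 u0(2) lt]
  have um: "u_mf \<beta> q z = u0" using umf_eq[OF u00 u01 ms(1) ms(3)] .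
  show "0 < u_mf \<beta> q z" "u_mf \<beta> q z < 1" using um u00 u01 by auto
  show "gg \<beta> q z (u_mf \<beta> q z) = 0" using um ms(1) by simp
  show "\<exists>x1 x2. 0 < x1 \<and> x1 < x2 \<and> x2 < u_mf \<beta> q z \<and> dgg \<beta> q z x1 < 0 \<and> dgg \<beta> q z x2 > 0"
    using um ms(2) by simp
  show "\<forall>\<nu>. global_minimizer \<beta> q z \<nu> \<longleftrightarrow> sym_point q (u_mf \<beta> q z) \<nu>"
  proof (intro allI iffI)
    fix \<nu> assume "global_minimizer \<beta> q z \<nu>"
    then obtain u where u: "u \<in> {0..<1}" "sym_point q u \<nu>" "\<forall>v\<in>{0..1}. Gs \<beta> q z u \<le> Gs \<beta> q z v"
      using reduction[OF q z, of \<beta> \<nu>] b0 by auto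
    have eq: "Gs \<beta> q z u = Gs \<beta> q z u0" using u u0 by (meson atLeastAtMost_iff atLeastLessThan_iff less_imp_le order_antisym)
    have ltu: "Gs \<beta> q z u < Gs \<beta> q z 0" using eq lt by simp
    then have u_0: "u > 0" using u(1) by (cases "u = 0") auto
    have "u = u0"
    proof (rule ccontr)
      assume ne: "u \<noteq> u0"
      show False
      proof (cases "u < u0")
        case True
        have "\<forall>v. u < v \<and> v < 1 \<longrightarrow> gg \<beta> q z v > 0"
          using min_struct(3)[OF b0 u_0 _ u(3) ltu] u by auto
        then show False using True u01 ms(1) by auto
      next
        case False
        then have "u0 < u" using ne by simp
        then have "Gs \<beta> q z u0 < Gs \<beta> q z u"
          using ms(3) u u00 by (intro Gs_inc[OF q z]) auto
        then show False using eq by simp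
      qed
    qed
    then show "sym_point q (u_mf \<beta> q z) \<nu>" using u um by simp
  next
    fix \<nu> assume "sym_point q (u_mf \<beta> q z) \<nu>"
    then show "global_minimizer \<beta> q z \<nu>"
      using reduction[OF q z, of \<beta> \<nu>] b0 um u0 u01 by auto
  qed
qed

end

context
  fixes q :: nat and z :: real
  assumes q: "q \<ge> 2" and z: "z \<ge> 2"
begin

lemma case_iff: "(real q - 1 = 1 \<and> z - 1 \<le> 3) \<longleftrightarrow> (q = 2 \<and> z \<le> 4)"
  using q by auto

lemma caseA:
  assumes nB: "\<not> (q = 2 \<and> z \<le> 4)"
  shows "\<exists>\<delta>>0. \<forall>\<beta>>bc q z. u_mf \<beta> q z \<ge> \<delta>"
proof -
  define W where "W = ww (real q - 1) (z - 1)"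
  obtain up where up: "0 \<le> up" "up < 1" "\<forall>x y. 0 \<le> x \<and> x < y \<and> y \<le> up \<longrightarrow> W x < W y"
     "\<not>(real q - 1 = 1 \<and> z - 1 \<le> 3) \<longrightarrow> up > 0"
    using W_shape[OF m1[OF q z], of "z - 1"] z unfolding W_def by auto
  have up0: "up > 0" using up(4) nB case_iff by simp
  have "u_mf \<beta> q z \<ge> up" if b: "\<beta> > bc q z" for \<beta>
  proof -
    obtain x1 x2 where x: "0 < x1" "x1 < x2" "x2 < u_mf \<beta> q z" "dgg \<beta> q z x1 < 0" "dgg \<beta> q z x2 > 0"
      using part_ii_above(5)[OF q z b] by blast
    have u1: "u_mf \<beta> q z < 1" using part_ii_above(2)[OF q z b] .
    have b0: "\<beta> > 0" using b bc_pos'[OF q z] by simp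
    define k where "k = kap \<beta> q z"
    have k0: "k > 0" using kap_pos[OF q z b0] by (simp add: k_def)
    have w1: "k * W x1 > real q" using x dgg_neg_iff(1)[OF q z, of x1 \<beta>] u1 by (simp add: W_def k_def)
    have w2: "k * W x2 < real q" using x dgg_neg_iff(2)[OF q z, of x2 \<beta>] u1 by (simp add: W_def k_def)
    have "W x2 < W x1" using w1 w2 k0 by (smt (verit) mult_left_mono)
    then have "x2 > up" using up(3) x by (meson less_asym linorder_not_le less_imp_le)
    then show ?thesis using x by simp
  qed
  then show ?thesis using up0 by blast
qed

lemma caseB_at:
  assumes B: "q = 2 \<and> z \<le> 4" and u: "0 < u" "u < 1"
  shows "gg (bc q z) q z u > 0"
proof -
  define W where "W = ww (real q - 1) (z - 1)"
  define b where "b = bc q z"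
  obtain up where up: "0 \<le> up" "up < 1" "\<forall>x y. up \<le> x \<and> x < y \<and> y < 1 \<longrightarrow> W y < W x"
     "(real q - 1 = 1 \<and> z - 1 \<le> 3) \<longrightarrow> up = 0"
    using W_shape[OF m1[OF q z], of "z - 1"] z unfolding W_def by auto
  have dec: "\<And>x y. 0 \<le> x \<Longrightarrow> x < y \<Longrightarrow> y < 1 \<Longrightarrow> W y < W x" using up B case_iff by auto
  have b0: "b > 0" using bc_pos'[OF q z] by (simp add: b_def)
  define k where "k = kap b q z"
  have k0: "k > 0" using kap_pos[OF q z b0] by (simp add: k_def)
  have dpos: "dgg b q z x > 0" if x: "0 < x" "x < 1" for x
  proof (rule ccontr)
    assume "\<not> dgg b q z x > 0"
    then have wx: "k * W x \<ge> real q" using dgg_neg_iff(2)[OF q z, of x b] x by (simp add: W_def k_def)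
    have dneg: "dgg b q z y < 0" if y: "0 \<le> y" "y < x" for y
    proof -
      have "W y > W x" using dec[of y x] y x by simp
      then have "k * W y > k * W x" using k0 by simp
      then show ?thesis using wx dgg_neg_iff(1)[OF q z, of y b] y x by (simp add: W_def k_def)
    qed
    have gneg: "gg b q z t < 0" if t: "0 < t" "t \<le> x" for t
    proof -
      have "gg b q z t < gg b q z 0"
        by (rule gg_dec[OF q z order_refl t(1)]) (use t x dneg in auto)
      then show ?thesis using gg0[OF q z, of b] by simp
    qed
    have "Gs b q z x < Gs b q z 0"
      by (rule Gs_dec[OF q z order_refl x(1)]) (use x gneg in auto)
    moreover have "Gs b q z 0 \<le> Gs b q z x" using at_bc[OF q z, of b x] x by (simp add: b_def)
    ultimately show False by simp
  qed
  have "gg b q z 0 < gg b q z u"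
    by (rule gg_inc[OF q z order_refl u(1) u(2)]) (use u dpos in auto)
  then show ?thesis using gg0[OF q z, of b] by (simp add: b_def)
qed

lemma gg_lin: "gg \<beta> q z u = gg \<beta>' q z u - (\<beta> - \<beta>') *
    (((1 + (real q - 1) * u) powr (z - 1) - (1 - u) powr (z - 1)) / real q powr (z - 1))"
  unfolding gg_def Delta_def by (simp add: algebra_simps diff_divide_distrib)

lemma caseB_lim:
  assumes B: "q = 2 \<and> z \<le> 4" and eps: "\<epsilon> > 0"
  shows "\<exists>\<eta>>0. \<forall>\<beta>. bc q z < \<beta> \<and> \<beta> < bc q z + \<eta> \<longrightarrow> u_mf \<beta> q z < \<epsilon>"
proof -
  define W where "W = ww (real q - 1) (z - 1)"
  define b where "b = bc q z"
  obtain up where up: "0 \<le> up" "up < 1" "\<forall>x y. up \<le> x \<and> x < y \<and> y < 1 \<longrightarrow> W y < W x"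
     "(real q - 1 = 1 \<and> z - 1 \<le> 3) \<longrightarrow> up = 0"
    using W_shape[OF m1[OF q z], of "z - 1"] z unfolding W_def by auto
  have dec: "\<And>x y. 0 \<le> x \<Longrightarrow> x < y \<Longrightarrow> y < 1 \<Longrightarrow> W y < W x" using up B case_iff by auto
  define e where "e = min \<epsilon> (1/2)"
  have e: "0 < e" "e < 1" "e \<le> \<epsilon>" using eps by (auto simp: e_def)
  define gc where "gc = gg b q z e"
  have gc: "gc > 0" using caseB_at[OF B e(1) e(2)] by (simp add: gc_def b_def)
  define K where "K = ((1 + (real q - 1) * e) powr (z - 1) - (1 - e) powr (z - 1)) / real q powr (z - 1)"
  have K0: "K \<ge> 0"
  proof -
    have "(real q - 1) * e \<ge> 0" using e m1[OF q z] by simp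
    then have "(1 - e) powr (z - 1) \<le> (1 + (real q - 1) * e) powr (z - 1)"
      using e z by (intro powr_mono2) auto
    then show ?thesis unfolding K_def using Qpos[OF q z] by simp
  qed
  define \<eta> where "\<eta> = gc / (K + 1)"
  have \<eta>: "\<eta> > 0" using gc K0 by (simp add: \<eta>_def)
  have "u_mf \<beta> q z < \<epsilon>" if \<beta>: "b < \<beta>" "\<beta> < b + \<eta>" for \<beta>
  proof -
    have bb: "\<beta> > bc q z" using \<beta> by (simp add: b_def)
    have b0: "\<beta> > 0" using bb bc_pos'[OF q z] by simp
    have "(\<beta> - b) * K \<le> (\<beta> - b) * (K + 1)" using \<beta> by simp
    also have "\<dots> < \<eta> * (K + 1)" using \<beta> K0 by simp
    also have "\<dots> = gc" using K0 by (simp add: \<eta>_def)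
    finally have "gg \<beta> q z e > 0" using gg_lin[of \<beta> e b] by (simp add: gc_def K_def)
    then have ge: "gg \<beta> q z e > 0" .
    define u0 where "u0 = u_mf \<beta> q z"
    have u0: "0 < u0" "u0 < 1" "gg \<beta> q z u0 = 0"
      using part_ii_above[OF q z bb] by (auto simp: u0_def)
    define k where "k = kap \<beta> q z"
    have k0: "k > 0" using kap_pos[OF q z b0] by (simp add: k_def)
    obtain x1 where x1: "0 < x1" "x1 < e" "gg \<beta> q z e - gg \<beta> q z 0 = (e - 0) * dgg \<beta> q z x1"
      using MVT2[OF e(1), of "gg \<beta> q z" "dgg \<beta> q z"] gg_deriv[OF q z] e by auto
    have "dgg \<beta> q z x1 > 0" using x1 ge e gg0[OF q z, of \<beta>] by (simp add: zero_less_mult_iff)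
    then have w1: "k * W x1 < real q" using dgg_neg_iff(2)[OF q z, of x1 \<beta>] x1 e by (simp add: W_def k_def)
    have dp: "dgg \<beta> q z t > 0" if t: "x1 < t" "t < 1" for t
    proof -
      have "W t < W x1" using dec[of x1 t] t x1 by simp
      then have "k * W t < real q" using w1 k0 by (smt (verit) mult_left_mono)
      then show ?thesis using dgg_neg_iff(2)[OF q z, of t \<beta>] t x1 by (simp add: W_def k_def)
    qed
    have "u0 < e"
    proof (rule ccontr)
      assume "\<not> u0 < e"
      then have "e \<le> u0" by simp
      moreover have "u0 \<noteq> e" using u0 ge by auto
      ultimately have eu: "e < u0" by simp
      have "gg \<beta> q z e < gg \<beta> q z u0"
        by (rule gg_inc[OF q z _ eu u0(2)]) (use e x1 dp u0 in auto)
      then show False using u0 ge by simp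
    qed
    then show ?thesis using e by (simp add: u0_def)
  qed
  then show ?thesis using \<eta> by (intro exI[of _ \<eta>]) (auto simp: b_def)
qed

lemma part_iii:
  "(\<not> (\<exists>L. ((\<lambda>\<beta>. if \<beta> < bc q z then 0 else u_mf \<beta> q z) \<longlongrightarrow> L) (at (bc q z))))
     \<longleftrightarrow> \<not> (q = 2 \<and> z \<le> 4)"
proof -
  define f where "f = (\<lambda>\<beta>. if \<beta> < bc q z then 0 else u_mf \<beta> q z)"
  define b where "b = bc q z"
  have left: "(f \<longlongrightarrow> 0) (at_left b)"
  proof (rule tendsto_eventually)
    show "eventually (\<lambda>x. f x = 0) (at_left b)"
      by (rule eventually_at_leftI[where a = "b - 1"]) (auto simp: f_def b_def)
  qed
  show ?thesis
  proof (cases "q = 2 \<and> z \<le> 4")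
    case True
    have right: "(f \<longlongrightarrow> 0) (at_right b)"
    proof (rule order_tendstoI)
      fix a :: real assume a: "a < 0"
      show "eventually (\<lambda>x. a < f x) (at_right b)"
      proof (rule eventually_at_rightI[where b = "b + 1"])
        fix x assume "x \<in> {b<..<b + 1}"
        then have "x > bc q z" by (simp add: b_def)
        then show "a < f x" using part_ii_above(1)[OF q z, of x] a by (simp add: f_def)
      qed simp
    next
      fix a :: real assume a: "0 < a"
      obtain \<eta> where \<eta>: "\<eta> > 0" "\<forall>\<beta>. bc q z < \<beta> \<and> \<beta> < bc q z + \<eta> \<longrightarrow> u_mf \<beta> q z < a"
        using caseB_lim[OF True a] by blast
      show "eventually (\<lambda>x. f x < a) (at_right b)"
      proof (rule eventually_at_rightI[where b = "b + \<eta>"])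
        fix x assume "x \<in> {b<..<b + \<eta>}"
        then show "f x < a" using \<eta> by (simp add: f_def b_def)
      qed (use \<eta> in simp)
    qed
    have "(f \<longlongrightarrow> 0) (at b)" using filterlim_split_at[OF left right] .
    then show ?thesis using True by (auto simp: f_def b_def)
  next
    case False
    obtain \<delta> where \<delta>: "\<delta> > 0" "\<forall>\<beta>>bc q z. u_mf \<beta> q z \<ge> \<delta>" using caseA[OF False] by blast
    have "\<not> (\<exists>L. (f \<longlongrightarrow> L) (at b))"
    proof
      assume "\<exists>L. (f \<longlongrightarrow> L) (at b)"
      then obtain L where L: "(f \<longlongrightarrow> L) (at b)" by blast
      then have Ll: "(f \<longlongrightarrow> L) (at_left b)" and Lr: "(f \<longlongrightarrow> L) (at_right b)"
        using filterlim_at_split by auto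
      have "L = 0" using tendsto_unique[OF _ Ll left] by simp
      moreover have "\<delta> \<le> L"
      proof (rule tendsto_lowerbound[OF Lr])
        show "eventually (\<lambda>x. \<delta> \<le> f x) (at_right b)"
        proof (rule eventually_at_rightI[where b = "b + 1"])
          fix x assume "x \<in> {b<..<b + 1}"
          then show "\<delta> \<le> f x" using \<delta> by (simp add: f_def b_def)
        qed simp
      qed simp
      ultimately show False using \<delta> by simp
    qed
    then show ?thesis using False by (simp add: f_def b_def)
  qed
qed

end

theorem theorem5p1:
  fixes q :: nat and z :: real
  assumes "q \<ge> 2" and "z \<ge> 2"
  shows "(\<forall>\<beta>\<ge>0. \<forall>\<nu>. global_minimizer \<beta> q z \<nu> \<longrightarrow>
            (\<exists>u\<in>{0..<1}. sym_point q u \<nu>))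
       \<and> (\<exists>\<beta>c>0.
            (\<forall>\<beta>. 0 \<le> \<beta> \<and> \<beta> < \<beta>c \<longrightarrow>
               (\<forall>\<nu>. global_minimizer \<beta> q z \<nu> \<longleftrightarrow> sym_point q 0 \<nu>))
          \<and> (\<forall>\<beta>>\<beta>c.
               (\<forall>\<nu>. global_minimizer \<beta> q z \<nu> \<longleftrightarrow> sym_point q (u_mf \<beta> q z) \<nu>))
          \<and> ((\<not> (\<exists>L. ((\<lambda>\<beta>. if \<beta> < \<beta>c then 0 else u_mf \<beta> q z) \<longlongrightarrow> L) (at \<beta>c)))
               \<longleftrightarrow> \<not> (q = 2 \<and> z \<le> 4)))"
proof (intro conjI)
  show "\<forall>\<beta>\<ge>0. \<forall>\<nu>. global_minimizer \<beta> q z \<nu> \<longrightarrow> (\<exists>u\<in>{0..<1}. sym_point q u \<nu>)"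
    using part_i[OF assms] by blast
  show "\<exists>\<beta>c>0.
            (\<forall>\<beta>. 0 \<le> \<beta> \<and> \<beta> < \<beta>c \<longrightarrow>
               (\<forall>\<nu>. global_minimizer \<beta> q z \<nu> \<longleftrightarrow> sym_point q 0 \<nu>))
          \<and> (\<forall>\<beta>>\<beta>c.
               (\<forall>\<nu>. global_minimizer \<beta> q z \<nu> \<longleftrightarrow> sym_point q (u_mf \<beta> q z) \<nu>))
          \<and> ((\<not> (\<exists>L. ((\<lambda>\<beta>. if \<beta> < \<beta>c then 0 else u_mf \<beta> q z) \<longlongrightarrow> L) (at \<beta>c)))
               \<longleftrightarrow> \<not> (q = 2 \<and> z \<le> 4))"
  proof (intro exI[of _ "bc q z"] conjI allI impI)
    show "0 < bc q z" using bc_pos'[OF assms] .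
    show "\<And>\<beta> \<nu>. 0 \<le> \<beta> \<and> \<beta> < bc q z \<Longrightarrow> global_minimizer \<beta> q z \<nu> \<longleftrightarrow> sym_point q 0 \<nu>"
      using part_ii_below[OF assms] by blast
    show "\<And>\<beta> \<nu>. bc q z < \<beta> \<Longrightarrow> global_minimizer \<beta> q z \<nu> \<longleftrightarrow> sym_point q (u_mf \<beta> q z) \<nu>"
      using part_ii_above(3)[OF assms] by blast
    show "(\<not> (\<exists>L. ((\<lambda>\<beta>. if \<beta> < bc q z then 0 else u_mf \<beta> q z) \<longlongrightarrow> L) (at (bc q z))))
               \<longleftrightarrow> \<not> (q = 2 \<and> z \<le> 4)"
      using part_iii[OF assms] .
  qed
qed

end
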